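(* For every integer $n\ge0$, with the notation of the context, the matrix $\mathrm{ch}^{(n)}_\Gamma$ satisfies $$\left(\tfrac{1}{(2\pi)^{n/2}}\mathrm{ch}^{(n)}_\Gamma\right)^{-1}\mathbf{e}\!\left[\widetilde Q^{(n)}\right]\left(\tfrac{1}{(2\pi)^{n/2}}\mathrm{ch}^{(n)}_\Gamma\right)=\mathbf{S}^{(n)},$$ $$\left(\tfrac{1}{(2\pi)^{n/2}}\mathrm{ch}^{(n)}_\Gamma\right)^{T}\mathbf{e}\!\left[\tfrac12\widetilde Q^{(n)}\right]\eta^{(n)}\left(\tfrac{1}{(2\pi)^{n/2}}\mathrm{ch}^{(n)}_\Gamma\right)=\chi^{(n)},$$ where $\mathbf{S}^{(n)}:=(\chi^{(n)})^{-1}(\chi^{(n)})^T$.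
   Context: Fix integers $a_1,a_2,\ldots\ge2$; $d_0=1$, $d_i=a_1\cdots a_i$; $\widetilde\mu_n=\sum_{i=0}^n(-1)^{n-i}d_i$; $\mathbf{e}[\alpha]=\exp(2\pi\sqrt{-1}\alpha)$, applied entrywise to diagonal matrices. Index sets: $I_0=\{1\}$; $I'_n=\{\kappa\in\{1,\dots,d_n\}\mid a_n\nmid\kappa\}$ ($n\ge1$); $I_1=I'_1$; $I_n=I'_n\sqcup I_{n-2}$ (formal disjoint union, $|I_n|=\widetilde\mu_n$) for $n\ge2$; matrices indexed by $I_n$ are written in block form with respect to $I'_n$ then $I_{n-2}$ (recursively). For $\kappa\in I'_n$, $\omega^{(n)}_{\kappa,i}:=(-1)^{i-1}\frac{d_{i-1}}{d_n}\kappa-\lfloor(-1)^{i-1}\frac{d_{i-1}}{d_n}\kappa\rfloor$. $\eta^{(n)}$ ($I_n\times I_n$): $\eta^{(0)}=(1)$, $\eta^{(1)}=(\frac{1}{a_1}\delta_{\kappa+\lambda,a_1})$, and for $n\ge2$, $\eta^{(n)}=\mathrm{diag}\big((\frac{1}{d_n}\delta_{\kappa+\lambda,d_n})_{\kappa,\lambda\in I'_n},\,-\frac{1}{a_n}\eta^{(n-2)}\big)$. $\widetilde Q^{(n)}$ (diagonal, $I_n\times I_n$): $\widetilde Q^{(0)}=(0)$; $\widetilde Q^{(1)}=\mathrm{diag}(\omega^{(1)}_{\kappa,1}-\frac12)_{\kappa\in I_1}$; for $n\ge2$, $\widetilde Q^{(n)}=\mathrm{diag}\big(\mathrm{diag}(\sum_{l=1}^n(\omega^{(n)}_{\kappa,l}-\frac12))_{\kappa\in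 I'_n},\,\widetilde Q^{(n-2)}\big)$. For $\kappa\in I'_n$: if $n=2m-1$, $c^{(n)}_\kappa=\prod_{l=1}^n\Gamma(1-\omega^{(n)}_{\kappa,l})\prod_{i=1}^m(1-\mathbf{e}[\omega^{(n)}_{\kappa,2i-1}])$; if $n=2m$, $c^{(n)}_\kappa=\prod_{l=1}^n\Gamma(1-\omega^{(n)}_{\kappa,l})\prod_{i=1}^m(1-\mathbf{e}[\omega^{(n)}_{\kappa,2i}])$. For $j\in\mathbb{Z}$, vectors $\mathrm{ch}^{(n)}_{\Gamma,j}\in\mathbb{C}^{I_n}$: $\mathrm{ch}^{(0)}_{\Gamma,j}=(1)$; $(\mathrm{ch}^{(1)}_{\Gamma,j})_\kappa=c^{(1)}_\kappa\mathbf{e}[\omega^{(1)}_{\kappa,1}(j-1)]$; for $n\ge2$, $(\mathrm{ch}^{(n)}_{\Gamma,j})_\kappa=c^{(n)}_\kappa\mathbf{e}[(-1)^{n-1}\omega^{(n)}_{\kappa,1}(j-1)]$ if $\kappa\in I'_n$ and $=2\pi\sqrt{-1}\,(\mathrm{ch}^{(n-2)}_{\Gamma,j})_\kappa$ if $\kappa\in I_{n-2}$. The $\widetilde\mu_n\times\widetilde\mu_n$ matrix $\mathrm{ch}^{(n)}_\Gamma:=(\mathrm{ch}^{(n)}_{\Gamma,1},\dots,\mathrm{ch}^{(n)}_{\Gamma,\widetilde\mu_n})$ (rows indexed by $I_n$, columns by $j=1,\dots,\widetilde\mu_n$). $\chi^{(n)}$ ($\widetilde\mu_n\times\widetilde\mu_n$):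 $\chi^{(n)}=1/\varphi_n(N)$ where $N=(\delta_{i+1,j})$ is the nilpotent shift matrix, $\varphi_n(t)=\prod_{i=0}^n(1-t^{d_i})^{(-1)^{n-i}}$ for $n\ge1$, $\varphi_0(t)=1-t$ (i.e. expand $1/\varphi_n(t)$ as a power series in $t$ and substitute $N$). $\chi^{(n)}$ is the Euler form matrix of a full exceptional collection in the category of $L_{f_n}$-graded matrix factorizations of $f_n=z_1^{a_1}z_2+\cdots+z_n^{a_n}$, and $\mathbf{S}^{(n)}$ is the matrix of the Serre functor on its Grothendieck group. *)

theory Defs
  imports "HOL-Analysis.Analysis" "HOL-Computational_Algebra.Formal_Power_Series"
    "Jordan_Normal_Form.Matrix"
begin

text \<open>The sequence a_1, a_2, ... is given as a function a :: nat => nat (a 0 unused).\<close>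

definition dd :: "(nat \<Rightarrow> nat) \<Rightarrow> nat \<Rightarrow> nat" where
  "dd a i = (\<Prod>k\<in>{1..i}. a k)"

definition mutilde :: "(nat \<Rightarrow> nat) \<Rightarrow> nat \<Rightarrow> int" where
  "mutilde a n = (\<Sum>i\<in>{0..n}. (-1) ^ (n - i) * int (dd a i))"

definition ee :: "real \<Rightarrow> complex" where
  "ee x = exp (2 * complex_of_real pi * \<i> * complex_of_real x)"

text \<open>Index set I_n as an ordered list of labelled elements (level, kappa):
  first I'_n (label n, kappa increasing), then I_{n-2} recursively.\<close>

definition Iprime :: "(nat \<Rightarrow> nat) \<Rightarrow> nat \<Rightarrow> (nat \<times> nat) list" where
  "Iprime a n = map (\<lambda>k. (n, k)) (filter (\<lambda>k. \<not> a n dvd k) [1..<dd a n + 1])"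

fun Iset :: "(nat \<Rightarrow> nat) \<Rightarrow> nat \<Rightarrow> (nat \<times> nat) list" where
  "Iset a 0 = [(0, 1)]"
| "Iset a (Suc 0) = Iprime a 1"
| "Iset a (Suc (Suc k)) = Iprime a (Suc (Suc k)) @ Iset a k"

definition omega :: "(nat \<Rightarrow> nat) \<Rightarrow> nat \<Rightarrow> nat \<Rightarrow> nat \<Rightarrow> real" where
  "omega a n k i =
    (let x = (-1) ^ (i - 1) * real (dd a (i - 1)) / real (dd a n) * real k
     in x - of_int \<lfloor>x\<rfloor>)"

fun eta :: "(nat \<Rightarrow> nat) \<Rightarrow> nat \<Rightarrow> nat \<times> nat \<Rightarrow> nat \<times> nat \<Rightarrow> complex" where
  "eta a 0 _ _ = 1"
| "eta a (Suc 0) (_, k) (_, l) = (if k + l = a 1 then 1 / of_nat (a 1) else 0)"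
| "eta a (Suc (Suc m)) (p, k) (q, l) =
    (if p = Suc (Suc m) \<and> q = Suc (Suc m) then
       (if k + l = dd a (Suc (Suc m)) then 1 / of_nat (dd a (Suc (Suc m))) else 0)
     else if p = Suc (Suc m) \<or> q = Suc (Suc m) then 0
     else - (1 / of_nat (a (Suc (Suc m)))) * eta a m (p, k) (q, l))"

fun Qt :: "(nat \<Rightarrow> nat) \<Rightarrow> nat \<Rightarrow> nat \<times> nat \<Rightarrow> real" where
  "Qt a 0 _ = 0"
| "Qt a (Suc 0) (_, k) = omega a 1 k 1 - 1/2"
| "Qt a (Suc (Suc m)) (p, k) =
    (if p = Suc (Suc m) then (\<Sum>l\<in>{1..Suc (Suc m)}. omega a (Suc (Suc m)) k l - 1/2)
     else Qt a m (p, k))"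

definition cc :: "(nat \<Rightarrow> nat) \<Rightarrow> nat \<Rightarrow> nat \<Rightarrow> complex" where
  "cc a n k =
    (\<Prod>l\<in>{1..n}. Gamma (complex_of_real (1 - omega a n k l))) *
    (if odd n then (\<Prod>i\<in>{1..(n + 1) div 2}. 1 - ee (omega a n k (2 * i - 1)))
     else (\<Prod>i\<in>{1..n div 2}. 1 - ee (omega a n k (2 * i))))"

fun chG :: "(nat \<Rightarrow> nat) \<Rightarrow> nat \<Rightarrow> nat \<times> nat \<Rightarrow> int \<Rightarrow> complex" where
  "chG a 0 _ _ = 1"
| "chG a (Suc 0) (_, k) j = cc a 1 k * ee (omega a 1 k 1 * of_int (j - 1))"
| "chG a (Suc (Suc m)) (p, k) j =
    (if p = Suc (Suc m) then
       cc a (Suc (Suc m)) k *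
         ee ((-1) ^ (Suc m) * omega a (Suc (Suc m)) k 1 * of_int (j - 1))
     else 2 * complex_of_real pi * \<i> * chG a m (p, k) j)"

text \<open>Matrices (Jordan_Normal_Form); rows indexed by the list Iset a n,
  columns j = 1..mutilde (column index c corresponds to j = c + 1).\<close>

definition chMat :: "(nat \<Rightarrow> nat) \<Rightarrow> nat \<Rightarrow> complex mat" where
  "chMat a n = mat (length (Iset a n)) (nat (mutilde a n))
     (\<lambda>(r, c). chG a n (Iset a n ! r) (int c + 1))"

definition QtMat :: "(nat \<Rightarrow> nat) \<Rightarrow> nat \<Rightarrow> real \<Rightarrow> complex mat" where
  "QtMat a n s = mat (length (Iset a n)) (length (Iset a n))
     (\<lambda>(r, c). if r = c then ee (s * Qt a n (Iset a n ! r)) else 0)"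

definition etaMat :: "(nat \<Rightarrow> nat) \<Rightarrow> nat \<Rightarrow> complex mat" where
  "etaMat a n = mat (length (Iset a n)) (length (Iset a n))
     (\<lambda>(r, c). eta a n (Iset a n ! r) (Iset a n ! c))"

definition phi :: "(nat \<Rightarrow> nat) \<Rightarrow> nat \<Rightarrow> complex fps" where
  "phi a n = (if n = 0 then 1 - fps_X else
     (\<Prod>i\<in>{0..n}. if even (n - i) then 1 - fps_X ^ dd a i
                   else inverse (1 - fps_X ^ dd a i)))"

text \<open>chi^(n) = 1/phi_n(N) with N the nilpotent shift (delta_{i+1,j}); N^k = (delta_{i+k,j}).\<close>
definition chiMat :: "(nat \<Rightarrow> nat) \<Rightarrow> nat \<Rightarrow> complex mat" where
  "chiMat a n = mat (nat (mutilde a n)) (nat (mutilde a n))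
     (\<lambda>(i, j). if i \<le> j then fps_nth (inverse (phi a n)) (j - i) else 0)"

definition mat_inv :: "complex mat \<Rightarrow> complex mat" where
  "mat_inv A = (THE B. B \<in> carrier_mat (dim_row A) (dim_row A) \<and>
                        B * A = 1\<^sub>m (dim_row A) \<and> A * B = 1\<^sub>m (dim_row A))"

definition SerreMat :: "(nat \<Rightarrow> nat) \<Rightarrow> nat \<Rightarrow> complex mat" where
  "SerreMat a n = mat_inv (chiMat a n) * transpose_mat (chiMat a n)"

end

theory Submission
  imports Defs "Jordan_Normal_Form.Determinant" "HOL-Computational_Algebra.Polynomial_FPS"
begin

lemma dd_0[simp]: "dd a 0 = 1" by (simp add: dd_def)
lemma dd_Suc: "dd a (Suc i) = dd a i * a (Suc i)"
  by (simp add: dd_def prod.nat_ivl_Suc' mult.commute)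

lemma dd_pos:
  assumes A: "\<And>i. i \<ge> 1 \<Longrightarrow> a i \<ge> 2"
  shows "dd a i > 0"
proof (induction i)
  case 0 then show ?case by simp
next
  case (Suc i) then show ?case using A[of "Suc i"] by (simp add: dd_Suc)
qed

lemma dd_dvd_factor:
  assumes "i < j"
  shows "\<exists>R. dd a j = dd a i * R \<and> a j dvd R"
  using assms
proof (induction j)
  case 0 then show ?case by simp
next
  case (Suc j)
  show ?case
  proof (cases "i = j")
    case True then show ?thesis by (auto simp: dd_Suc)
  next
    case False
    with Suc obtain R where "dd a j = dd a i * R" by auto
    then show ?thesis by (auto simp: dd_Suc intro!: exI[of _ "R * a (Suc j)"])
  qed
qed

lemma dd_dvd: "i \<le> j \<Longrightarrow> dd a i dvd dd a j"
  using dd_dvd_factor[of i j a] by (cases "i = j") auto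

lemma mutilde_0[simp]: "mutilde a 0 = 1" by (simp add: mutilde_def)
lemma mutilde_1: "mutilde a (Suc 0) = int (a 1) - 1"
  by (simp add: mutilde_def dd_def)
lemma mutilde_SS: "mutilde a (Suc (Suc m)) = int (dd a (Suc (Suc m))) - int (dd a (Suc m)) + mutilde a m"
proof -
  have "{0..Suc (Suc m)} = insert (Suc (Suc m)) (insert (Suc m) {0..m})" by auto
  then have "mutilde a (Suc (Suc m)) = int (dd a (Suc (Suc m))) - int (dd a (Suc m))
      + (\<Sum>i\<in>{0..m}. (-1) ^ (Suc (Suc m) - i) * int (dd a i))"
    by (simp add: mutilde_def)
  also have "(\<Sum>i\<in>{0..m}. (-1) ^ (Suc (Suc m) - i) * int (dd a i)) = mutilde a m"
    unfolding mutilde_def by (intro sum.cong) (auto simp: Suc_diff_le)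
  finally show ?thesis .
qed

lemma ee_add: "ee (x + y) = ee x * ee y"
  by (simp add: ee_def distrib_left exp_add)
lemma ee_0[simp]: "ee 0 = 1" by (simp add: ee_def)
lemma ee_diff: "ee (x - y) = ee x / ee y"
  by (simp add: ee_def right_diff_distrib exp_diff)
lemma ee_minus: "ee (- x) = inverse (ee x)"
  by (simp add: ee_def exp_minus)
lemma ee_nonzero[simp]: "ee x \<noteq> 0" by (simp add: ee_def)
lemma ee_eq_1_iff: "ee x = 1 \<longleftrightarrow> x \<in> \<int>"
proof -
  have "ee x = 1 \<longleftrightarrow> (\<exists>n::int. 2 * pi * x = of_int (2 * n) * pi)"
    unfolding ee_def exp_eq_1 by simp
  also have "\<dots> \<longleftrightarrow> (\<exists>n::int. x = of_int n)" by auto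
  also have "\<dots> \<longleftrightarrow> x \<in> \<int>" by (auto elim: Ints_cases)
  finally show ?thesis .
qed

lemma ee_int[simp]: "ee (of_int k) = 1"
  by (simp add: ee_eq_1_iff)
lemma ee_nat[simp]: "ee (of_nat k) = 1"
  by (simp add: ee_eq_1_iff)

lemma ee_power: "ee x ^ m = ee (of_nat m * x)"
  by (induction m) (auto simp: ee_add distrib_right)

lemma ee_frac: "ee (x - of_int \<lfloor>x\<rfloor>) = ee x"
  by (simp add: ee_diff)

lemma ee_sum: "ee (\<Sum>l\<in>S. f l) = (\<Prod>l\<in>S. ee (f l))"
  by (induction S rule: infinite_finite_induct) (auto simp: ee_add)

lemma ee_add_int: "ee (x + of_int k) = ee x" by (simp add: ee_add)

lemma geom_sum_Suc: "(1 - z) * (\<Sum>r<N. z ^ r) = 1 - (z::complex) ^ N"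
proof (induction N)
  case (Suc N)
  have "(1-z)*(\<Sum>r<Suc N. z^r) = (1-z)*(\<Sum>r<N. z^r) + (1-z)*z^N" by (simp add: ring_distribs)
  also have "\<dots> = (1 - z^N) + (1-z)*z^N" using Suc.IH by simp
  also have "\<dots> = 1 - z^Suc N" by (simp add: algebra_simps)
  finally show ?case .
qed simp

lemma root_geom_sum:
  assumes "(z::complex) ^ N = 1"
  shows "(\<Sum>r<N. z ^ r) = (if z = 1 then of_nat N else 0)"
  using geom_sum_Suc[of z N] assms by auto

lemma root_sum:
  assumes "N > 0"
  shows "(\<Sum>k\<in>{1..N}. ee (of_int m * real k / real N)) = (if int N dvd m then of_nat N else 0)"
proof -
  define z where "z = ee (of_int m / real N)"
  have zk: "ee (of_int m * real k / real N) = z ^ k" for k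
    by (simp add: z_def ee_power field_simps)
  have zN: "z ^ N = 1" using assms by (simp add: z_def ee_power)
  have "(\<Sum>k\<in>{1..N}. z ^ k) = (\<Sum>k<N. z ^ k)"
  proof -
    have "(\<Sum>k\<in>{1..N}. z ^ k) = (\<Sum>k\<in>{0..<N}. z ^ Suc k)"
      by (rule sum.reindex_bij_witness[of _ Suc "\<lambda>k. k - 1"]) auto
    also have "\<dots> = z * (\<Sum>k<N. z ^ k)" by (simp add: sum_distrib_left atLeast0LessThan)
    also have "\<dots> = (\<Sum>k<N. z ^ k)"
    proof (cases "z = 1")
      case True then show ?thesis by simp
    next
      case False then show ?thesis using root_geom_sum[OF zN] by simp
    qed
    finally show ?thesis .
  qed
  also have "\<dots> = (if z = 1 then of_nat N else 0)" by (rule root_geom_sum[OF zN])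
  also have "(z = 1) \<longleftrightarrow> int N dvd m"
  proof -
    have "z = 1 \<longleftrightarrow> of_int m / real N \<in> \<int>" by (simp add: z_def ee_eq_1_iff)
    also have "\<dots> \<longleftrightarrow> int N dvd m"
    proof
      assume "of_int m / real N \<in> \<int>"
      then obtain q where "of_int m / real N = of_int q" by (auto elim: Ints_cases)
      then have "(of_int m::real) = of_int (q * int N)" using assms by (simp add: field_simps)
      then have "m = q * int N" by linarith
      then show "int N dvd m" by simp
    next
      assume "int N dvd m"
      then obtain q where "m = int N * q" by auto
      then show "of_int m / real N \<in> \<int>" using assms by simp
    qed
    finally show ?thesis .
  qed
  finally show ?thesis by (simp add: zk)
qed

definition Qp :: "(nat \<Rightarrow> nat) \<Rightarrow> nat \<Rightarrow> complex poly" where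
  "Qp a m = (\<Sum>r<a (Suc m). monom 1 (r * dd a m))"

fun Fp :: "(nat \<Rightarrow> nat) \<Rightarrow> nat \<Rightarrow> complex poly" where
  "Fp a 0 = 1"
| "Fp a (Suc 0) = [:1, -1:]"
| "Fp a (Suc (Suc m)) = Qp a m * Fp a m"

lemma poly_Qp: "poly (Qp a m) w = (\<Sum>r<a (Suc m). (w ^ dd a m) ^ r)"
proof -
  have "(w ^ dd a m) ^ r = w ^ (r * dd a m)" for r by (metis power_mult mult.commute)
  then show ?thesis by (simp add: Qp_def poly_sum poly_monom)
qed

lemma induct2: "P 0 \<Longrightarrow> P (Suc 0) \<Longrightarrow> (\<And>m. P m \<Longrightarrow> P (Suc (Suc m))) \<Longrightarrow> P n"
  by (induction n rule: nat_less_induct) (metis less_Suc_eq not0_implies_Suc)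

lemma poly_Qp_mult: "poly (Qp a m) w * (1 - w ^ dd a m) = 1 - w ^ dd a (Suc m)"
  using geom_sum_Suc[of "w ^ dd a m" "a (Suc m)"]
  by (simp add: poly_Qp mult.commute dd_Suc power_mult)

lemma poly_Qp_root:
  assumes "w ^ dd a (Suc m) = 1"
  shows "poly (Qp a m) w = (if w ^ dd a m = 1 then of_nat (a (Suc m)) else 0)"
  unfolding poly_Qp by (rule root_geom_sum) (use assms in \<open>simp add: dd_Suc power_mult\<close>)

lemma Qp_mult: "Qp a m * (1 - monom 1 (dd a m)) = 1 - monom 1 (dd a (Suc m))"
  by (rule poly_eq_poly_eq_iff[THEN iffD1]) (auto simp: poly_Qp_mult poly_monom)

definition phig :: "(nat \<Rightarrow> nat) \<Rightarrow> nat \<Rightarrow> nat \<Rightarrow> complex fps" where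
  "phig a n i = (if even (n - i) then 1 - fps_X ^ dd a i else inverse (1 - fps_X ^ dd a i))"

lemma phi_prod: "phi a n = (\<Prod>i\<in>{0..n}. phig a n i)"
  by (cases "n = 0") (auto simp: phi_def phig_def)

lemma phi_SS: "phi a (Suc (Suc m)) =
   (1 - fps_X ^ dd a (Suc (Suc m))) * inverse (1 - fps_X ^ dd a (Suc m)) * phi a m"
proof -
  have "{0..Suc (Suc m)} = insert (Suc (Suc m)) (insert (Suc m) {0..m})" by auto
  then have "phi a (Suc (Suc m)) = phig a (Suc (Suc m)) (Suc (Suc m)) * phig a (Suc (Suc m)) (Suc m)
     * (\<Prod>i\<in>{0..m}. phig a (Suc (Suc m)) i)"
    by (simp add: phi_prod mult.assoc)
  also have "(\<Prod>i\<in>{0..m}. phig a (Suc (Suc m)) i) = phi a m"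
    unfolding phi_prod by (intro prod.cong) (auto simp: phig_def Suc_diff_le)
  finally show ?thesis by (simp add: phig_def)
qed

lemma phi_1: "phi a (Suc 0) = inverse (1 - fps_X) * (1 - fps_X ^ dd a 1)"
proof -
  have "{0..Suc 0} = {0, 1}" by auto
  then show ?thesis by (simp add: phi_prod phig_def)
qed

lemma one_minus_Xp_inv:
  assumes "k > 0"
  shows "inverse (1 - fps_X ^ k :: complex fps) * (1 - fps_X ^ k) = 1"
  by (rule inverse_mult_eq_1) (use assms in simp)

lemma Fp_phi:
  assumes A: "\<And>i. i \<ge> 1 \<Longrightarrow> a i \<ge> 2"
  shows "fps_of_poly (Fp a n) * phi a n = 1 - fps_X ^ dd a n"
proof (induction n rule: induct2)
  case 1 show ?case by (simp add: phi_def)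
next
  case 2
  have e: "fps_of_poly [:1, -1:] = (1 - fps_X :: complex fps)"
    by (simp add: fps_of_poly_pCons fps_eq_iff fps_X_def)
  have "fps_of_poly (Fp a (Suc 0)) * phi a (Suc 0) = (inverse (1 - fps_X ^ 1) * (1 - fps_X ^ 1)) * (1 - fps_X ^ dd a 1)"
    by (simp add: phi_1 e mult_ac)
  also have "\<dots> = 1 - fps_X ^ dd a 1" by (subst one_minus_Xp_inv) auto
  finally show ?case by simp
next
  case (3 m)
  have q: "fps_of_poly (Qp a m) * (1 - fps_X ^ dd a m) = 1 - fps_X ^ dd a (Suc m)"
    using arg_cong[OF Qp_mult[of a m], of fps_of_poly]
    by (simp add: fps_of_poly_mult fps_of_poly_monom' fps_of_poly_diff)
  have "fps_of_poly (Fp a (Suc (Suc m))) * phi a (Suc (Suc m)) =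
     (1 - fps_X ^ dd a (Suc (Suc m))) * inverse (1 - fps_X ^ dd a (Suc m)) * fps_of_poly (Qp a m) * (fps_of_poly (Fp a m) * phi a m)"
    by (simp add: phi_SS fps_of_poly_mult mult_ac)
  also have "\<dots> = (1 - fps_X ^ dd a (Suc (Suc m))) * (inverse (1 - fps_X ^ dd a (Suc m)) * (1 - fps_X ^ dd a (Suc m)))"
    using 3 q by (simp add: mult_ac)
  also have "\<dots> = 1 - fps_X ^ dd a (Suc (Suc m))"
    using one_minus_Xp_inv[of "dd a (Suc m)"] dd_pos[OF A] by simp
  finally show ?case .
qed

lemma inverse_phi_nth:
  assumes A: "\<And>i. i \<ge> 1 \<Longrightarrow> a i \<ge> 2" and k: "k < dd a n"
  shows "fps_nth (inverse (phi a n)) k = coeff (Fp a n) k"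
proof -
  define D where "D = dd a n"
  have D: "D > 0" using dd_pos[OF A] by (simp add: D_def)
  define J where "J = inverse (1 - fps_X ^ D :: complex fps)"
  have J: "J * (1 - fps_X ^ D) = 1" using one_minus_Xp_inv[OF D] by (simp add: J_def)
  have "fps_of_poly (Fp a n) * J * phi a n = J * (fps_of_poly (Fp a n) * phi a n)" by (simp add: mult_ac)
  also have "\<dots> = 1" using Fp_phi[OF A, where n=n] J by (simp add: D_def)
  finally have "inverse (phi a n) = fps_of_poly (Fp a n) * J"
    by (intro fps_inverse_unique) (simp add: mult_ac)
  moreover have "J = 1 + fps_X ^ D * J" using J by (simp add: algebra_simps)
  ultimately have "inverse (phi a n) = fps_of_poly (Fp a n) + fps_X ^ D * (fps_of_poly (Fp a n) * J)"
    by (metis distrib_left mult.left_commute mult.right_neutral)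
  then show ?thesis using k by (simp add: fps_X_power_mult_nth D_def)
qed

lemma degree_Fp:
  assumes A: "\<And>i. i \<ge> 1 \<Longrightarrow> a i \<ge> 2"
  shows "int (degree (Fp a n)) + mutilde a n \<le> int (dd a n)"
proof (induction n rule: induct2)
  case 1 then show ?case by simp
next
  case 2 then show ?case by (simp add: mutilde_1 dd_def)
next
  case (3 m)
  have dq: "degree (Qp a m) \<le> (a (Suc m) - 1) * dd a m"
    unfolding Qp_def
    by (rule degree_sum_le) (auto intro!: order.trans[OF degree_monom_le])
  have "degree (Fp a (Suc (Suc m))) \<le> (a (Suc m) - 1) * dd a m + degree (Fp a m)"
    using degree_mult_le[of "Qp a m" "Fp a m"] dq by simp
  then have d1: "int (degree (Fp a (Suc (Suc m)))) \<le> int ((a (Suc m) - 1) * dd a m) + int (degree (Fp a m))"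
    by linarith
  have "a (Suc m) \<ge> 1" using A[of "Suc m"] by simp
  then have e: "int ((a (Suc m) - 1) * dd a m) = int (dd a (Suc m)) - int (dd a m)"
    by (simp add: dd_Suc of_nat_diff algebra_simps)
  have "int (degree (Fp a (Suc (Suc m)))) \<le> int (dd a (Suc m)) - int (dd a m) + int (degree (Fp a m))"
    using d1 e by linarith
  then show ?case using 3 by (simp add: mutilde_SS)
qed

definition Fper :: "complex poly \<Rightarrow> nat \<Rightarrow> int \<Rightarrow> complex" where
  "Fper p N k = (\<Sum>m\<le>degree p. coeff p m * (if int N dvd int m - k then 1 else 0))"

lemma poly_root_sum:
  assumes N: "N > 0" and s: "s = 1 \<or> s = -1"
  shows "(\<Sum>\<kappa>\<in>{1..N}. poly p (ee (of_int s * real \<kappa> / real N)) * ee (- (of_int s * real \<kappa> * of_int k / real N)))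
     = of_nat N * Fper p N k"
proof -
  have dvd_s: "int N dvd s * x \<longleftrightarrow> int N dvd x" for x using s by auto
  have "(\<Sum>\<kappa>\<in>{1..N}. poly p (ee (of_int s * real \<kappa> / real N)) * ee (- (of_int s * real \<kappa> * of_int k / real N)))
     = (\<Sum>\<kappa>\<in>{1..N}. \<Sum>m\<le>degree p. coeff p m * ee (of_int (s * (int m - k)) * real \<kappa> / real N))"
    unfolding poly_altdef sum_distrib_right
    by (intro sum.cong refl) (simp add: ee_power mult.assoc ee_add[symmetric] field_simps)
  also have "\<dots> = (\<Sum>m\<le>degree p. coeff p m * (\<Sum>\<kappa>\<in>{1..N}. ee (of_int (s * (int m - k)) * real \<kappa> / real N)))"
    by (subst sum.swap) (simp add: sum_distrib_left)
  also have "\<dots> = (\<Sum>m\<le>degree p. coeff p m * (if int N dvd int m - k then of_nat N else 0))"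
    using s by (intro sum.cong refl) (simp only: root_sum[OF N] dvd_s)
  also have "\<dots> = of_nat N * Fper p N k"
    by (simp add: Fper_def sum_distrib_left mult_ac if_distrib cong: if_cong)
  finally show ?thesis .
qed

lemma frac_pos: "(x::real) \<notin> \<int> \<Longrightarrow> 0 < x - of_int \<lfloor>x\<rfloor>"
  by (metis Ints_of_int diff_gt_0_iff_gt less_eq_real_def of_int_floor_le)

lemma frac_lt1: "(x::real) - of_int \<lfloor>x\<rfloor> < 1"
  by linarith

lemma frac_int_minus:
  assumes "(x::real) \<notin> \<int>"
  shows "(of_int N - x) - of_int \<lfloor>of_int N - x\<rfloor> = 1 - (x - of_int \<lfloor>x\<rfloor>)"
proof -
  have "\<lfloor>of_int N - x\<rfloor> = N + \<lfloor>- x\<rfloor>"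
    by (metis add.commute floor_add_int uminus_add_conv_diff)
  moreover have "\<lfloor>- x\<rfloor> = - \<lfloor>x\<rfloor> - 1"
  proof -
    have "x \<noteq> of_int \<lfloor>x\<rfloor>" using assms by (metis Ints_of_int)
    then have "of_int \<lfloor>x\<rfloor> < x" using of_int_floor_le[of x] by linarith
    then show ?thesis by (intro floor_unique) (auto, linarith)
  qed
  ultimately show ?thesis by simp
qed

lemma ee_not1: "0 < x \<Longrightarrow> x < 1 \<Longrightarrow> ee x \<noteq> 1"
  by (auto simp: ee_eq_1_iff elim!: Ints_cases)

lemma gamma_factor:
  assumes x: "0 < x" "x < 1"
  shows "Gamma (complex_of_real (1 - x)) * Gamma (complex_of_real (1 - (1 - x))) * ee ((x - 1/2) / 2)
       = 2 * complex_of_real pi / (1 - ee (- x))"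
proof -
  define u where "u = exp (\<i> * complex_of_real (pi * x))"
  have u0: "u \<noteq> 0" by (simp add: u_def)
  have refl: "Gamma (complex_of_real x) * Gamma (1 - complex_of_real x) = of_real pi / sin (of_real pi * of_real x)"
    by (rule Gamma_reflection_complex)
  have sinne: "sin (pi * x) \<noteq> 0"
  proof -
    have "0 < pi * x" "pi * x < pi" using x by auto
    then show ?thesis using sin_gt_zero by fastforce
  qed
  have sin_u: "sin (complex_of_real pi * complex_of_real x) = (u - inverse u) / (2 * \<i>)"
    unfolding sin_exp_eq u_def by (simp add: exp_minus)
  have e1: "ee ((x - 1/2) / 2) = u * (- \<i>)"
  proof -
    have "ee ((x - 1/2) / 2) = exp (\<i> * complex_of_real (pi * x) + \<i> * complex_of_real (- pi / 2))"
      unfolding ee_def by (rule arg_cong[of _ _ exp]) (simp add: field_simps)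
    also have "\<dots> = u * exp (\<i> * complex_of_real (- pi / 2))" by (simp only: exp_add u_def)
    also have "exp (\<i> * complex_of_real (- pi / 2)) = - \<i>"
      by (simp add: exp_Euler cos_of_real sin_of_real flip: of_real_minus) (simp add: of_real_minus)
    finally show ?thesis .
  qed
  have e2: "ee (- x) = inverse (u ^ 2)"
  proof -
    have "ee (- x) = exp (- (2 * (\<i> * complex_of_real (pi * x))))"
      unfolding ee_def by (rule arg_cong[of _ _ exp]) (simp add: field_simps)
    also have "\<dots> = inverse (u ^ 2)" by (simp add: u_def exp_minus exp_double power2_eq_square)
    finally show ?thesis .
  qed
  have ne: "u - inverse u \<noteq> 0" using sinne sin_u sin_of_real[of "pi * x"]
    by (metis divide_eq_0_iff of_real_eq_0_iff of_real_mult)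
  have "Gamma (complex_of_real (1 - x)) * Gamma (complex_of_real (1 - (1 - x))) * ee ((x - 1/2) / 2)
      = of_real pi / ((u - inverse u) / (2 * \<i>)) * (u * (- \<i>))"
    using refl by (simp add: sin_u e1 mult.commute)
  also have "\<dots> = 2 * complex_of_real pi / (1 - ee (- x))"
    using u0 ne unfolding e2
    by (simp add: field_simps power2_eq_square)
  finally show ?thesis .
qed

lemma ee_1[simp]: "ee 1 = 1" using ee_int[of 1] by simp

lemma ee_one_minus: "ee (1 - x) = ee (- x)"
  by (simp add: ee_diff ee_minus divide_inverse)

lemma perl:
  assumes x: "0 < x" "x < 1"
    and y: "if even (n - l) then ee x = y else ee (- x) = y"
  shows "Gamma (complex_of_real (1 - x)) * Gamma (complex_of_real (1 - (1 - x))) * ee ((x - 1/2) / 2)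
     * (if even (n - l) then (1 - ee x) * (1 - ee (1 - x)) else 1)
     = 2 * complex_of_real pi * (if even (n - l) then 1 - y else inverse (1 - y))"
proof -
  have ne: "1 - ee (- x) \<noteq> 0"
  proof
    assume "1 - ee (- x) = 0"
    then have "ee x = 1" by (simp add: ee_minus)
    then show False using ee_not1[OF x] by simp
  qed
  show ?thesis
    unfolding gamma_factor[OF x] ee_one_minus using y ne
    by (cases "even (n - l)") (auto simp: divide_inverse)
qed

lemma omega_nonint:
  assumes A: "\<And>i. i \<ge> 1 \<Longrightarrow> a i \<ge> 2" and l: "1 \<le> l" "l \<le> n" and nd: "\<not> a n dvd k"
  shows "(-1) ^ (l - 1) * real (dd a (l - 1)) / real (dd a n) * real k \<notin> \<int>"
proof
  define \<sigma> :: real where "\<sigma> = (-1) ^ (l - 1)"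
  have \<sigma>\<sigma>: "\<sigma> * \<sigma> = 1" by (simp add: \<sigma>_def flip: power_add)
  assume "(-1) ^ (l - 1) * real (dd a (l - 1)) / real (dd a n) * real k \<in> \<int>"
  then obtain z where z: "\<sigma> * real (dd a (l - 1)) / real (dd a n) * real k = of_int z"
    by (auto simp: \<sigma>_def elim!: Ints_cases)
  have "l - 1 < n" using l by arith
  then obtain R where R: "dd a n = dd a (l - 1) * R" "a n dvd R"
    using dd_dvd_factor by blast
  have Dp: "dd a (l - 1) > 0" "dd a n > 0" using dd_pos[OF A] by auto
  then have Rp: "R > 0" using R by (metis gr0I mult_0_right)
  from z have "\<sigma> * real k = of_int z * real R" using Dp Rp by (simp add: R field_simps)
  then have "\<sigma> * (\<sigma> * real k) = \<sigma> * (of_int z * real R)" by simp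
  then have "real k = \<sigma> * of_int z * real R" using \<sigma>\<sigma> by (simp add: mult.assoc[symmetric])
  then have "real_of_int (int k) = real_of_int ((-1) ^ (l - 1) * z * int R)" by (simp add: \<sigma>_def)
  then have "int k = (-1) ^ (l - 1) * z * int R" by (simp only: of_int_eq_iff)
  then have "int R dvd int k" by simp
  then have "R dvd k" by simp
  then show False using R(2) nd dvd_trans by blast
qed

lemma omega_props:
  assumes A: "\<And>i. i \<ge> 1 \<Longrightarrow> a i \<ge> 2" and l: "1 \<le> l" "l \<le> n" and nd: "\<not> a n dvd k"
    and k: "k \<le> dd a n"
  shows "0 < omega a n k l" "omega a n k l < 1" "omega a n (dd a n - k) l = 1 - omega a n k l"
proof -
  define x where "x = (-1) ^ (l - 1) * real (dd a (l - 1)) / real (dd a n) * real k"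
  have xn: "x \<notin> \<int>" using omega_nonint[where a=a and l=l and n=n and k=k, OF A l nd] by (simp add: x_def)
  have om: "omega a n k l = x - of_int \<lfloor>x\<rfloor>" by (simp add: omega_def x_def Let_def)
  show "0 < omega a n k l" using frac_pos[OF xn] om by simp
  show "omega a n k l < 1" using frac_lt1[of x] om by simp
  have Dp: "dd a n > 0" using dd_pos[OF A] by auto
  have "(-1) ^ (l - 1) * real (dd a (l - 1)) / real (dd a n) * real (dd a n - k)
      = of_int ((-1) ^ (l - 1) * int (dd a (l - 1))) - x"
    using k Dp by (simp add: x_def of_nat_diff field_simps)
  then have "omega a n (dd a n - k) l = (of_int ((-1) ^ (l - 1) * int (dd a (l - 1))) - x)
      - of_int \<lfloor>of_int ((-1) ^ (l - 1) * int (dd a (l - 1))) - x\<rfloor>"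
    by (simp add: omega_def Let_def)
  moreover have "(of_int ((-1) ^ (l - 1) * int (dd a (l - 1))) - x)
      - of_int \<lfloor>of_int ((-1) ^ (l - 1) * int (dd a (l - 1))) - x\<rfloor> = 1 - (x - of_int \<lfloor>x\<rfloor>)"
    by (rule frac_int_minus[OF xn])
  ultimately show "omega a n (dd a n - k) l = 1 - omega a n k l"
    using om by linarith
qed

lemma ee_omega_w:
  assumes l: "1 \<le> l" "l \<le> n"
  shows "if even (n - l) then ee (omega a n k l) = ee ((-1)^(n-1) * real k / real (dd a n)) ^ dd a (l - 1)
         else ee (- omega a n k l) = ee ((-1)^(n-1) * real k / real (dd a n)) ^ dd a (l - 1)"
proof -
  define x where "x = (-1) ^ (l - 1) * real (dd a (l - 1)) / real (dd a n) * real k"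
  have e: "ee (omega a n k l) = ee x" unfolding omega_def Let_def x_def by (rule ee_frac)
  have s: "((-1::real) ^ (n - 1)) = (-1) ^ (l - 1) * (-1) ^ (n - l)"
    using l by (simp flip: power_add)
  have w: "ee ((-1)^(n-1) * real k / real (dd a n)) ^ dd a (l - 1)
      = ee ((-1) ^ (l - 1) * (-1) ^ (n - l) * real (dd a (l - 1)) * real k / real (dd a n))"
    unfolding ee_power s by (simp add: mult_ac)
  show ?thesis
  proof (cases "even (n - l)")
    case True
    have p: "(-1::real)^(n-l) = 1" using True by simp
    have "ee (omega a n k l) = ee ((-1)^(n-1) * real k / real (dd a n)) ^ dd a (l - 1)"
      unfolding e w p x_def by (simp add: mult_ac)
    then show ?thesis using True by simp
  next
    case False
    have p: "(-1::real)^(n-l) = -1" using False by simp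
    have m: "ee (- omega a n k l) = ee (- x)" by (simp add: ee_minus e)
    have "ee (- omega a n k l) = ee ((-1)^(n-1) * real k / real (dd a n)) ^ dd a (l - 1)"
      unfolding m w p x_def by (simp add: mult_ac)
    then show ?thesis using False by simp
  qed
qed

lemma sel_prod:
  fixes n :: nat and g :: "nat \<Rightarrow> complex"
  shows "(if odd n then (\<Prod>i\<in>{1..(n+1) div 2}. g (2*i-1)) else (\<Prod>i\<in>{1..n div 2}. g (2*i)))
   = (\<Prod>l\<in>{1..n}. if even (n-l) then g l else (1::complex))"
proof -
  have r: "(\<Prod>l\<in>{1..n}. if even (n-l) then g l else (1::complex)) = (\<Prod>l\<in>{l\<in>{1..n}. even (n-l)}. g l)"
    by (rule prod.inter_filter[symmetric]) simp
  show ?thesis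
  proof (cases "odd n")
    case True
    have "(\<Prod>i\<in>{1..(n+1) div 2}. g (2*i-1)) = (\<Prod>l\<in>{l\<in>{1..n}. even (n-l)}. g l)"
      by (rule prod.reindex_bij_witness[of _ "\<lambda>l. (l+1) div 2" "\<lambda>i. 2*i-1"])
        (use True in \<open>auto; presburger\<close>)+
    then show ?thesis using True r by simp
  next
    case False
    have "(\<Prod>i\<in>{1..n div 2}. g (2*i)) = (\<Prod>l\<in>{l\<in>{1..n}. even (n-l)}. g l)"
      by (rule prod.reindex_bij_witness[of _ "\<lambda>l. l div 2" "\<lambda>i. 2*i"])
        (use False in \<open>auto; presburger\<close>)+
    then show ?thesis using False r by simp
  qed
qed

definition Pn :: "(nat \<Rightarrow> nat) \<Rightarrow> nat \<Rightarrow> complex \<Rightarrow> complex" where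
  "Pn a n w = (\<Prod>l\<in>{1..n}. if even (n - l) then 1 - w ^ dd a (l - 1) else inverse (1 - w ^ dd a (l - 1)))"

lemma poly_Fp_eval:
  assumes "\<forall>l\<in>{1..n}. w ^ dd a (l - 1) \<noteq> 1"
  shows "poly (Fp a n) w = Pn a n w"
  using assms
proof (induction n rule: induct2)
  case 1 then show ?case by (simp add: Pn_def)
next
  case 2 then show ?case by (simp add: Pn_def)
next
  case (3 m)
  have IH: "poly (Fp a m) w = Pn a m w" using 3 by auto
  have "Suc m \<in> {1..Suc (Suc m)}" by simp
  from bspec[OF "3.prems" this] have "w ^ dd a (Suc m - 1) \<noteq> 1" .
  then have ne: "1 - w ^ dd a m \<noteq> 0" by simp
  have q: "poly (Qp a m) w = (1 - w ^ dd a (Suc m)) * inverse (1 - w ^ dd a m)"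
    using poly_Qp_mult[of a m w] ne by (simp add: field_simps)
  have set: "{1..Suc (Suc m)} = insert (Suc (Suc m)) (insert (Suc m) {1..m})" by auto
  have "Pn a (Suc (Suc m)) w = (1 - w ^ dd a (Suc m)) * inverse (1 - w ^ dd a m) *
     (\<Prod>l\<in>{1..m}. if even (Suc (Suc m) - l) then 1 - w ^ dd a (l - 1) else inverse (1 - w ^ dd a (l - 1)))"
    unfolding Pn_def set by simp
  also have "(\<Prod>l\<in>{1..m}. if even (Suc (Suc m) - l) then 1 - w ^ dd a (l - 1) else inverse (1 - w ^ dd a (l - 1)))
     = Pn a m w"
    unfolding Pn_def by (intro prod.cong) (auto simp: Suc_diff_le)
  finally show ?case using IH q by simp
qed

lemma Qt_top: "n \<ge> 1 \<Longrightarrow> Qt a n (n, k) = (\<Sum>l\<in>{1..n}. omega a n k l - 1/2)"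
  by (cases n; cases "n - 1") simp_all

lemma chG_top: "n \<ge> 1 \<Longrightarrow> chG a n (n, k) j = cc a n k * ee ((-1)^(n-1) * omega a n k 1 * of_int (j - 1))"
  by (cases n; cases "n - 1") simp_all

lemma cc_split: "cc a n k = (\<Prod>l\<in>{1..n}. Gamma (complex_of_real (1 - omega a n k l))) *
    (\<Prod>l\<in>{1..n}. if even (n - l) then 1 - ee (omega a n k l) else 1)"
  unfolding cc_def using sel_prod[of n "\<lambda>l. 1 - ee (omega a n k l)"] by simp

lemma prod5: "(\<Prod>l\<in>S. F1 l * F2 l * F3 l * F4 l * (F5 l :: complex)) =
   (\<Prod>l\<in>S. F1 l) * (\<Prod>l\<in>S. F2 l) * (\<Prod>l\<in>S. F3 l) * (\<Prod>l\<in>S. F4 l) * (\<Prod>l\<in>S. F5 l)"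
  by (simp add: prod.distrib)

lemma perk:
  assumes A: "\<And>i. i \<ge> 1 \<Longrightarrow> a i \<ge> 2" and n: "n \<ge> 1"
    and k: "1 \<le> k" "k \<le> dd a n" and nd: "\<not> a n dvd k"
  shows "chG a n (n, k) i * ee (1/2 * Qt a n (n, k)) * chG a n (n, dd a n - k) j
   = (2 * complex_of_real pi) ^ n * poly (Fp a n) (ee ((-1)^(n-1) * real k / real (dd a n)))
     * ee (- ((-1)^(n-1) * real k * of_int (j - i) / real (dd a n)))"
proof -
  define d where "d = dd a n"
  define \<sigma> :: real where "\<sigma> = (-1)^(n-1)"
  define w where "w = ee (\<sigma> * real k / real d)"
  define x where "x l = omega a n k l" for l
  have dpos: "d > 0" using dd_pos[OF A] by (simp add: d_def)
  have "dd a n = dd a (n - 1) * a n" using n dd_Suc[of a "n - 1"] by simp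
  then have adn: "a n dvd d" by (simp add: d_def)
  have kd: "k < d" using k nd adn by (metis d_def le_neq_implies_less)
  have x01: "0 < x l" "x l < 1" if "l \<in> {1..n}" for l
    using omega_props[where a=a and l=l and n=n and k=k, OF A _ _ nd k(2)] that by (auto simp: x_def)
  have xr: "omega a n (d - k) l = 1 - x l" if "l \<in> {1..n}" for l
    using omega_props[where a=a and l=l and n=n and k=k, OF A _ _ nd k(2)] that by (auto simp: x_def d_def)
  have xw: "if even (n - l) then ee (x l) = w ^ dd a (l - 1) else ee (- x l) = w ^ dd a (l - 1)"
    if "l \<in> {1..n}" for l
    using ee_omega_w[of l n a k] that by (simp add: x_def w_def \<sigma>_def d_def)
  have x1: "x 1 = real k / real d"
  proof -
    have "0 \<le> real k / real d" "real k / real d < 1" using kd dpos by auto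
    then have "\<lfloor>real k / real d\<rfloor> = 0" by (simp add: floor_eq_iff)
    then show ?thesis by (simp add: x_def omega_def d_def Let_def)
  qed
  have wne: "w ^ dd a (l - 1) \<noteq> 1" if l: "l \<in> {1..n}" for l
  proof (cases "even (n - l)")
    case True then show ?thesis using xw[OF l] ee_not1[OF x01[OF l]] by simp
  next
    case False
    then have "w ^ dd a (l - 1) = inverse (ee (x l))" using xw[OF l] by (simp add: ee_minus)
    then show ?thesis using ee_not1[OF x01[OF l]] by (metis inverse_1 inverse_inverse_eq)
  qed
  have poly: "poly (Fp a n) w = Pn a n w" by (rule poly_Fp_eval) (use wne in auto)
  have Q: "ee (1/2 * Qt a n (n, k)) = (\<Prod>l\<in>{1..n}. ee ((x l - 1/2) / 2))"
    unfolding Qt_top[OF n] sum_distrib_left ee_sum[symmetric] by (simp add: x_def)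
  have cck: "cc a n k = (\<Prod>l\<in>{1..n}. Gamma (complex_of_real (1 - x l))) *
    (\<Prod>l\<in>{1..n}. if even (n - l) then 1 - ee (x l) else 1)"
    unfolding x_def by (rule cc_split)
  have ccd: "cc a n (d - k) = (\<Prod>l\<in>{1..n}. Gamma (complex_of_real (1 - (1 - x l)))) *
    (\<Prod>l\<in>{1..n}. if even (n - l) then 1 - ee (1 - x l) else 1)"
    unfolding cc_split using xr by (intro arg_cong2[where f="(*)"] prod.cong) auto
  have "cc a n k * ee (1/2 * Qt a n (n, k)) * cc a n (d - k)
     = (\<Prod>l\<in>{1..n}. Gamma (complex_of_real (1 - x l)) * Gamma (complex_of_real (1 - (1 - x l)))
          * ee ((x l - 1/2) / 2) * (if even (n - l) then 1 - ee (x l) else 1)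
          * (if even (n - l) then 1 - ee (1 - x l) else 1))"
    unfolding prod5 cck ccd Q by (simp add: mult_ac)
  also have "\<dots> = (\<Prod>l\<in>{1..n}. 2 * complex_of_real pi *
      (if even (n - l) then 1 - w ^ dd a (l - 1) else inverse (1 - w ^ dd a (l - 1))))"
  proof (intro prod.cong refl)
    fix l assume l: "l \<in> {1..n}"
    have "Gamma (complex_of_real (1 - x l)) * Gamma (complex_of_real (1 - (1 - x l))) * ee ((x l - 1/2) / 2)
        * (if even (n - l) then (1 - ee (x l)) * (1 - ee (1 - x l)) else 1)
        = 2 * complex_of_real pi * (if even (n - l) then 1 - w ^ dd a (l - 1) else inverse (1 - w ^ dd a (l - 1)))"
      by (rule perl[OF x01[OF l] xw[OF l]])
    then show "Gamma (complex_of_real (1 - x l)) * Gamma (complex_of_real (1 - (1 - x l)))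
          * ee ((x l - 1/2) / 2) * (if even (n - l) then 1 - ee (x l) else 1)
          * (if even (n - l) then 1 - ee (1 - x l) else 1) =
        2 * complex_of_real pi * (if even (n - l) then 1 - w ^ dd a (l - 1) else inverse (1 - w ^ dd a (l - 1)))"
      by (cases "even (n - l)") (simp_all add: mult_ac)
  qed
  also have "\<dots> = (2 * complex_of_real pi) ^ n * Pn a n w"
    by (simp add: prod.distrib Pn_def)
  finally have main: "cc a n k * ee (1/2 * Qt a n (n, k)) * cc a n (d - k) = (2 * complex_of_real pi) ^ n * poly (Fp a n) w"
    using poly by simp
  have x1': "omega a n k 1 = real k / real d" using x1 by (simp add: x_def)
  have x1d: "omega a n (d - k) 1 = 1 - real k / real d" using xr[of 1] n x1 by simp
  have arg: "\<sigma> * x 1 * of_int (i - 1) + \<sigma> * (1 - x 1) * of_int (j - 1)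
     = - (\<sigma> * real k * of_int (j - i) / real d) + of_int ((-1)^(n-1) * (j - 1))"
    using dpos unfolding x1 \<sigma>_def by (simp add: field_simps)
  have ex: "ee (\<sigma> * x 1 * of_int (i - 1)) * ee (\<sigma> * (1 - x 1) * of_int (j - 1))
      = ee (- (\<sigma> * real k * of_int (j - i) / real d))"
    unfolding ee_add[symmetric] arg ee_add_int ..
  have "chG a n (n, k) i * ee (1/2 * Qt a n (n, k)) * chG a n (n, d - k) j
     = (cc a n k * ee (1/2 * Qt a n (n, k)) * cc a n (d - k)) *
       (ee (\<sigma> * x 1 * of_int (i - 1)) * ee (\<sigma> * (1 - x 1) * of_int (j - 1)))"
    unfolding chG_top[OF n] \<sigma>_def x_def x1' x1d by (simp add: mult_ac)
  also have "\<dots> = (2 * complex_of_real pi) ^ n * poly (Fp a n) w * ee (- (\<sigma> * real k * of_int (j - i) / real d))"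
    unfolding main ex ..
  finally show ?thesis by (simp add: w_def \<sigma>_def d_def)
qed

lemma set_Iprime: "set (Iprime a n) = (\<lambda>k. (n, k)) ` {k\<in>{1..dd a n}. \<not> a n dvd k}"
  by (auto simp: Iprime_def)

lemma distinct_Iprime: "distinct (Iprime a n)"
  by (auto simp: Iprime_def distinct_map inj_on_def)

lemma Iset_fst_aux: "\<forall>p. p \<in> set (Iset a n) \<longrightarrow> fst p \<le> n"
proof (induction n rule: induct2)
  case 1 then show ?case by simp
next
  case 2 then show ?case by (auto simp: Iprime_def)
next
  case (3 m) then show ?case by (fastforce simp: Iprime_def)
qed

lemma Iset_fst: "p \<in> set (Iset a n) \<Longrightarrow> fst p \<le> n"
  using Iset_fst_aux by blast

lemma distinct_Iset: "distinct (Iset a n)"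
proof (induction n rule: induct2)
  case (3 m)
  have "\<forall>p\<in>set (Iset a m). fst p \<le> m" using Iset_fst by blast
  moreover have "\<forall>p\<in>set (Iprime a (Suc (Suc m))). fst p = Suc (Suc m)" by (auto simp: Iprime_def)
  ultimately have "set (Iprime a (Suc (Suc m))) \<inter> set (Iset a m) = {}" by fastforce
  then show ?case using 3 distinct_Iprime[of a "Suc (Suc m)"] by simp
qed (auto simp: distinct_Iprime)

lemma mult_set:
  assumes "(A::nat) > 0"
  shows "{k\<in>{1..A*D}. A dvd k} = (\<lambda>j. A*j) ` {1..D}"
proof
  show "(\<lambda>j. A*j) ` {1..D} \<subseteq> {k\<in>{1..A*D}. A dvd k}"
    using assms by auto
  show "{k\<in>{1..A*D}. A dvd k} \<subseteq> (\<lambda>j. A*j) ` {1..D}"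
  proof
    fix k assume "k \<in> {k\<in>{1..A*D}. A dvd k}"
    then obtain j where k: "k = A*j" "1 \<le> A*j" "A*j \<le> A*D" by auto
    then have "1 \<le> j" "j \<le> D" using assms by (auto simp: gr0_conv_Suc)
    then show "k \<in> (\<lambda>j. A*j) ` {1..D}" using k by auto
  qed
qed

lemma card_nondvd:
  assumes "(A::nat) > 0"
  shows "card {k\<in>{1..A*D}. \<not> A dvd k} = A*D - D"
proof -
  have u: "{1..A*D} = {k\<in>{1..A*D}. \<not> A dvd k} \<union> {k\<in>{1..A*D}. A dvd k}" by auto
  have "card {1..A*D} = card {k\<in>{1..A*D}. \<not> A dvd k} + card {k\<in>{1..A*D}. A dvd k}"
    by (subst u, rule card_Un_disjoint) auto
  moreover have "card {k\<in>{1..A*D}. A dvd k} = D"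
    unfolding mult_set[OF assms] using assms by (subst card_image) (auto simp: inj_on_def)
  ultimately show ?thesis by simp
qed

lemma length_Iset:
  assumes A: "\<And>i. i \<ge> 1 \<Longrightarrow> a i \<ge> 2"
  shows "int (length (Iset a n)) = mutilde a n"
proof -
  have lp: "length (Iprime a (Suc m)) = dd a (Suc m) - dd a m" for m
  proof -
    have "length (Iprime a (Suc m)) = card (set (Iprime a (Suc m)))"
      using distinct_card[OF distinct_Iprime] by simp
    also have "\<dots> = card {k\<in>{1..dd a (Suc m)}. \<not> a (Suc m) dvd k}"
      unfolding set_Iprime by (subst card_image) (auto simp: inj_on_def)
    also have "\<dots> = dd a (Suc m) - dd a m"
      using card_nondvd[of "a (Suc m)" "dd a m"] A[of "Suc m"] by (simp add: dd_Suc mult.commute)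
    finally show ?thesis .
  qed
  have le: "dd a m \<le> dd a (Suc m)" for m
    using A[of "Suc m"] by (simp add: dd_Suc)
  show ?thesis
  proof (induction n rule: induct2)
    case 1 then show ?case by simp
  next
    case 2 then show ?case using lp[of 0] A[of 1] by (simp add: mutilde_1 dd_def of_nat_diff)
  next
    case (3 m) then show ?case using lp[of "Suc m"] le[of "Suc m"] by (simp add: mutilde_SS of_nat_diff)
  qed
qed

lemma sum_multiples:
  assumes "(A::nat) > 0"
  shows "(\<Sum>k\<in>{1..A*D}. if A dvd k then g k else 0) = (\<Sum>j\<in>{1..D}. (g (A*j) :: complex))"
proof -
  have "(\<Sum>k\<in>{1..A*D}. if A dvd k then g k else 0) = (\<Sum>k\<in>{k\<in>{1..A*D}. A dvd k}. g k)"
    by (rule sum.inter_filter[symmetric]) simp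
  also have "\<dots> = (\<Sum>j\<in>{1..D}. g (A*j))"
    unfolding mult_set[OF assms] using assms by (subst sum.reindex) (auto simp: inj_on_def)
  finally show ?thesis .
qed

lemma sum_nondvd:
  fixes N A :: nat
  shows "(\<Sum>k\<in>{k\<in>{1..N}. \<not> A dvd k}. g k) = (\<Sum>k\<in>{1..N}. g k) - (\<Sum>k\<in>{1..N}. if A dvd k then g k else (0::complex))"
proof -
  have u: "{1..N} = {k\<in>{1..N}. \<not> A dvd k} \<union> {k\<in>{1..N}. A dvd k}" by auto
  have "(\<Sum>k\<in>{1..N}. g k) = (\<Sum>k\<in>{k\<in>{1..N}. \<not> A dvd k}. g k) + (\<Sum>k\<in>{k\<in>{1..N}. A dvd k}. g k)"
  proof -
    have f1: "finite {k\<in>{1..N}. \<not> A dvd k}" "finite {k\<in>{1..N}. A dvd k}" by simp_all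
    show ?thesis by (subst u, rule sum.union_disjoint[OF f1]) auto
  qed
  moreover have "(\<Sum>k\<in>{k\<in>{1..N}. A dvd k}. g k) = (\<Sum>k\<in>{1..N}. if A dvd k then g k else 0)"
    by (rule sum.inter_filter) simp
  ultimately show ?thesis by simp
qed

lemma ee_ratio_1:
  assumes "A > 0" and s: "s = 1 \<or> s = -1"
  shows "ee (of_int s * real k / real A) = 1 \<longleftrightarrow> A dvd k"
proof -
  have "ee (of_int s * real k / real A) = 1 \<longleftrightarrow> of_int s * real k / real A \<in> \<int>" by (rule ee_eq_1_iff)
  also have "\<dots> \<longleftrightarrow> A dvd k"
  proof
    assume "of_int s * real k / real A \<in> \<int>"
    then obtain q where "of_int s * real k / real A = of_int q" by (auto elim: Ints_cases)
    then have "(of_int (s * int k) :: real) = of_int (q * int A)" using assms(1) by (simp add: field_simps)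
    then have "s * int k = q * int A" by (simp only: of_int_eq_iff)
    then have "int A dvd s * int k" by simp
    then have "int A dvd int k" using s by auto
    then show "A dvd k" by simp
  next
    assume "A dvd k"
    then obtain q where "k = A * q" by auto
    then show "of_int s * real k / real A \<in> \<int>" using assms(1) by simp
  qed
  finally show ?thesis .
qed

definition Bs :: "(nat \<Rightarrow> nat) \<Rightarrow> nat \<Rightarrow> int \<Rightarrow> int \<Rightarrow> complex" where
  "Bs a n i j = (\<Sum>p\<in>set (Iset a n). \<Sum>q\<in>set (Iset a n).
      chG a n p i * ee (1/2 * Qt a n p) * eta a n p q * chG a n q j)"

definition Top :: "(nat \<Rightarrow> nat) \<Rightarrow> nat \<Rightarrow> int \<Rightarrow> int \<Rightarrow> complex" where
  "Top a n i j = (\<Sum>p\<in>set (Iprime a n). \<Sum>q\<in>set (Iprime a n).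
      chG a n p i * ee (1/2 * Qt a n p) * eta a n p q * chG a n q j)"

definition gk :: "(nat \<Rightarrow> nat) \<Rightarrow> nat \<Rightarrow> int \<Rightarrow> int \<Rightarrow> nat \<Rightarrow> complex" where
  "gk a n i j k = poly (Fp a n) (ee ((-1)^(n-1) * real k / real (dd a n)))
     * ee (- ((-1)^(n-1) * real k * of_int (j - i) / real (dd a n)))"

lemma eta_top: "n \<ge> 1 \<Longrightarrow> eta a n (n, k) (n, l) = (if k + l = dd a n then 1 / of_nat (dd a n) else 0)"
  by (cases n; cases "n - 1") (simp_all add: dd_def)

lemma Top_eval:
  assumes A: "\<And>i. i \<ge> 1 \<Longrightarrow> a i \<ge> 2" and n: "n \<ge> 1"
  shows "Top a n i j = (2 * complex_of_real pi) ^ n / of_nat (dd a n) *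
     (of_nat (dd a n) * Fper (Fp a n) (dd a n) (j - i) - (\<Sum>k'\<in>{1..dd a (n - 1)}. gk a n i j (a n * k')))"
proof -
  define d where "d = dd a n"
  define K where "K = {k\<in>{1..d}. \<not> a n dvd k}"
  have dpos: "d > 0" using dd_pos[OF A] by (simp add: d_def)
  have dfac: "d = a n * dd a (n - 1)" using n dd_Suc[of a "n - 1"] by (simp add: d_def mult.commute)
  have anpos: "a n > 0" using A[OF n] by simp
  have adn: "a n dvd d" using dfac by simp
  have Kr: "d - k \<in> K" if "k \<in> K" for k
  proof -
    have "\<not> a n dvd d - k"
    proof
      assume h: "a n dvd d - k"
      have "a n dvd d - (d - k)" by (rule dvd_diff_nat[OF adn h])
      moreover have "d - (d - k) = k" using that by (auto simp: K_def)
      ultimately show False using that by (auto simp: K_def)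
    qed
    moreover have "k \<noteq> d" using that adn by (auto simp: K_def)
    ultimately show ?thesis using that by (auto simp: K_def)
  qed
  have inj: "inj_on (\<lambda>k. (n, k)) X" for X by (auto simp: inj_on_def)
  have sP: "set (Iprime a n) = (\<lambda>k. (n, k)) ` K" by (simp add: set_Iprime K_def d_def)
  have "Top a n i j = (\<Sum>k\<in>K. \<Sum>l\<in>K. chG a n (n, k) i * ee (1/2 * Qt a n (n, k)) * eta a n (n, k) (n, l) * chG a n (n, l) j)"
    unfolding Top_def sP by (simp add: sum.reindex[OF inj])
  also have "\<dots> = (\<Sum>k\<in>K. chG a n (n, k) i * ee (1/2 * Qt a n (n, k)) * (1 / of_nat d) * chG a n (n, d - k) j)"
  proof (intro sum.cong refl)
    fix k assume k: "k \<in> K"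
    have "(\<Sum>l\<in>K. chG a n (n, k) i * ee (1/2 * Qt a n (n, k)) * eta a n (n, k) (n, l) * chG a n (n, l) j)
       = (\<Sum>l\<in>K. if l = d - k then chG a n (n, k) i * ee (1/2 * Qt a n (n, k)) * (1 / of_nat d) * chG a n (n, l) j else 0)"
    proof (intro sum.cong refl)
      fix l assume l: "l \<in> K"
      have "k \<le> d" using k by (auto simp: K_def)
      then have "(k + l = d) = (l = d - k)" by auto
      then show "chG a n (n, k) i * ee (1/2 * Qt a n (n, k)) * eta a n (n, k) (n, l) * chG a n (n, l) j
         = (if l = d - k then chG a n (n, k) i * ee (1/2 * Qt a n (n, k)) * (1 / of_nat d) * chG a n (n, l) j else 0)"
        by (simp add: eta_top[OF n] d_def)
    qed
    also have "\<dots> = chG a n (n, k) i * ee (1/2 * Qt a n (n, k)) * (1 / of_nat d) * chG a n (n, d - k) j"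
      using Kr[OF k] by (simp add: K_def)
    finally show "(\<Sum>l\<in>K. chG a n (n, k) i * ee (1/2 * Qt a n (n, k)) * eta a n (n, k) (n, l) * chG a n (n, l) j)
       = chG a n (n, k) i * ee (1/2 * Qt a n (n, k)) * (1 / of_nat d) * chG a n (n, d - k) j" .
  qed
  also have "\<dots> = (\<Sum>k\<in>K. (2 * complex_of_real pi) ^ n / of_nat d * gk a n i j k)"
  proof (intro sum.cong refl)
    fix k assume k: "k \<in> K"
    have "chG a n (n, k) i * ee (1/2 * Qt a n (n, k)) * chG a n (n, d - k) j = (2 * complex_of_real pi) ^ n * gk a n i j k"
      using perk[where a=a and n=n and k=k and i=i and j=j, OF A n] k by (auto simp: K_def d_def gk_def mult.assoc)
    then show "chG a n (n, k) i * ee (1/2 * Qt a n (n, k)) * (1 / of_nat d) * chG a n (n, d - k) j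
       = (2 * complex_of_real pi) ^ n / of_nat d * gk a n i j k"
      by (simp add: field_simps)
  qed
  also have "\<dots> = (2 * complex_of_real pi) ^ n / of_nat d * (\<Sum>k\<in>K. gk a n i j k)"
    by (simp add: sum_distrib_left)
  also have "(\<Sum>k\<in>K. gk a n i j k) = (\<Sum>k\<in>{1..d}. gk a n i j k) - (\<Sum>k'\<in>{1..dd a (n - 1)}. gk a n i j (a n * k'))"
    unfolding K_def sum_nondvd dfac sum_multiples[OF anpos] ..
  also have "(\<Sum>k\<in>{1..d}. gk a n i j k) = of_nat d * Fper (Fp a n) d (j - i)"
  proof -
    have s: "(-1::int)^(n-1) = 1 \<or> (-1::int)^(n-1) = -1" by (cases "even (n - 1)") auto
    show ?thesis using poly_root_sum[OF dpos s, of "Fp a n" "j - i"] by (simp add: gk_def d_def)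
  qed
  finally show ?thesis by (simp add: d_def)
qed

lemma excl_1:
  assumes A: "\<And>i. i \<ge> 1 \<Longrightarrow> a i \<ge> 2"
  shows "(\<Sum>k'\<in>{1..dd a (1 - 1)}. gk a 1 i j (a 1 * k')) = 0"
proof -
  have "a 1 > 0" using A[of 1] by simp
  then have "ee (real (a 1) / real (dd a 1)) = 1" by (simp add: dd_def)
  then show ?thesis by (simp add: gk_def)
qed

lemma excl_SS:
  assumes A: "\<And>i. i \<ge> 1 \<Longrightarrow> a i \<ge> 2"
  shows "(\<Sum>k'\<in>{1..dd a (Suc (Suc m) - 1)}. gk a (Suc (Suc m)) i j (a (Suc (Suc m)) * k'))
     = of_nat (dd a (Suc m)) * Fper (Fp a m) (dd a m) (j - i)"
proof -
  define \<sigma> :: real where "\<sigma> = (-1)^(Suc m)"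
  define A2 where "A2 = a (Suc (Suc m))"
  define A1 where "A1 = a (Suc m)"
  define D1 where "D1 = dd a (Suc m)"
  define D0 where "D0 = dd a m"
  have A2p: "A2 > 0" using A[of "Suc (Suc m)"] by (simp add: A2_def)
  have A1p: "A1 > 0" using A[of "Suc m"] by (simp add: A1_def)
  have D0p: "D0 > 0" using dd_pos[OF A] by (simp add: D0_def)
  have D1: "D1 = A1 * D0" by (simp add: D1_def A1_def D0_def dd_Suc mult.commute)
  have D1p: "D1 > 0" using D1 A1p D0p by simp
  have dd2: "dd a (Suc (Suc m)) = D1 * A2" by (simp add: D1_def A2_def dd_Suc)
  have s: "(-1::int)^(Suc m) = 1 \<or> (-1::int)^(Suc m) = -1" by (cases "even (Suc m)") auto
  define h where "h k' = poly (Fp a m) (ee (\<sigma> * real k' / real D1)) * ee (- (\<sigma> * real k' * of_int (j - i) / real D1))" for k'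
  have step1: "gk a (Suc (Suc m)) i j (A2 * k') = (if A1 dvd k' then of_nat A1 * h k' else 0)" for k'
  proof -
    define w where "w = ee (\<sigma> * real k' / real D1)"
    have r1: "\<sigma> * real (A2 * k') / real (dd a (Suc (Suc m))) = \<sigma> * real k' / real D1"
      using A2p by (simp add: dd2)
    have r2: "\<sigma> * real (A2 * k') * of_int (j - i) / real (dd a (Suc (Suc m))) = \<sigma> * real k' * of_int (j - i) / real D1"
      using A2p by (simp add: dd2)
    have wD1: "w ^ dd a (Suc m) = 1"
    proof -
      have "w ^ dd a (Suc m) = ee (of_nat D1 * (\<sigma> * real k' / real D1))" unfolding w_def ee_power D1_def ..
      also have "of_nat D1 * (\<sigma> * real k' / real D1) = of_int ((-1)^(Suc m) * int k')" using D1p by (simp add: \<sigma>_def)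
      finally show ?thesis by (simp only: ee_int)
    qed
    have wD0: "w ^ dd a m = 1 \<longleftrightarrow> A1 dvd k'"
    proof -
      have "w ^ dd a m = ee (of_int ((-1)^(Suc m)) * real k' / real A1)"
        unfolding w_def ee_power using D0p A1p by (simp add: D1 D0_def \<sigma>_def)
      then show ?thesis using ee_ratio_1[OF A1p s, of k'] by simp
    qed
    have "gk a (Suc (Suc m)) i j (A2 * k') = poly (Qp a m) w * poly (Fp a m) w * ee (- (\<sigma> * real k' * of_int (j - i) / real D1))"
      unfolding gk_def using r1 r2 by (simp add: w_def \<sigma>_def A2_def)
    also have "poly (Qp a m) w = (if A1 dvd k' then of_nat A1 else 0)"
      using poly_Qp_root[OF wD1] wD0 by (simp add: A1_def)
    finally show ?thesis by (simp add: h_def w_def)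
  qed
  have "(\<Sum>k'\<in>{1..dd a (Suc (Suc m) - 1)}. gk a (Suc (Suc m)) i j (a (Suc (Suc m)) * k'))
      = (\<Sum>k'\<in>{1..A1 * D0}. if A1 dvd k' then of_nat A1 * h k' else 0)"
    using step1 by (simp add: A2_def D1[symmetric] D1_def)
  also have "\<dots> = (\<Sum>k''\<in>{1..D0}. of_nat A1 * h (A1 * k''))"
    by (rule sum_multiples[OF A1p])
  also have "\<dots> = of_nat A1 * (\<Sum>k''\<in>{1..D0}. poly (Fp a m) (ee (of_int ((-1)^(Suc m)) * real k'' / real D0))
        * ee (- (of_int ((-1)^(Suc m)) * real k'' * of_int (j - i) / real D0)))"
    unfolding sum_distrib_left using A1p D0p by (intro sum.cong refl) (simp add: h_def D1 \<sigma>_def mult.assoc)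
  also have "\<dots> = of_nat A1 * (of_nat D0 * Fper (Fp a m) D0 (j - i))"
    by (subst poly_root_sum[OF D0p s]) simp
  moreover have e: "dd a (Suc m) = A1 * dd a m" by (simp add: A1_def dd_Suc mult.commute)
  ultimately show ?thesis by (simp add: D0_def)
qed

lemma Bs_0: "Bs a 0 i j = 1"
  by (simp add: Bs_def)

lemma Fper_1: "Fper 1 (Suc 0) k = 1"
  by (simp add: Fper_def)

lemma low_facts:
  assumes "fst p \<le> m" "fst q \<le> m"
  shows "chG a (Suc (Suc m)) p i = 2 * complex_of_real pi * \<i> * chG a m p i"
    "Qt a (Suc (Suc m)) p = Qt a m p"
    "eta a (Suc (Suc m)) p q = - (1 / of_nat (a (Suc (Suc m)))) * eta a m p q"
  using assms by (cases p; cases q; simp)+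

lemma cross_facts:
  assumes "fst p = Suc (Suc m)" "fst q \<le> m"
  shows "eta a (Suc (Suc m)) p q = 0" "eta a (Suc (Suc m)) q p = 0"
  using assms by (cases p; cases q; simp)+

lemma Bs_SS:
  "Bs a (Suc (Suc m)) i j = Top a (Suc (Suc m)) i j + 4 * complex_of_real pi ^ 2 / of_nat (a (Suc (Suc m))) * Bs a m i j"
proof -
  define n where "n = Suc (Suc m)"
  define P where "P = set (Iprime a n)"
  define S where "S = set (Iset a m)"
  define T where "T p q = chG a n p i * ee (1/2 * Qt a n p) * eta a n p q * chG a n q j" for p q
  have fP: "\<forall>p\<in>P. fst p = n" by (auto simp: P_def Iprime_def)
  have fS: "\<forall>p\<in>S. fst p \<le> m" using Iset_fst by (auto simp: S_def)
  have disj: "P \<inter> S = {}" using fP fS by (fastforce simp: n_def)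
  have fin: "finite P" "finite S" by (simp_all add: P_def S_def)
  have U: "set (Iset a n) = P \<union> S" by (simp add: n_def P_def S_def)
  have "Bs a n i j = (\<Sum>p\<in>P \<union> S. \<Sum>q\<in>P \<union> S. T p q)" by (simp add: Bs_def U T_def)
  also have "\<dots> = (\<Sum>p\<in>P. \<Sum>q\<in>P. T p q) + (\<Sum>p\<in>P. \<Sum>q\<in>S. T p q) + ((\<Sum>p\<in>S. \<Sum>q\<in>P. T p q) + (\<Sum>p\<in>S. \<Sum>q\<in>S. T p q))"
    by (simp add: sum.union_disjoint[OF fin disj] sum.distrib)
  also have "(\<Sum>p\<in>P. \<Sum>q\<in>S. T p q) = 0"
    using fP fS by (intro sum.neutral ballI) (simp add: T_def cross_facts n_def)
  also have "(\<Sum>p\<in>S. \<Sum>q\<in>P. T p q) = 0"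
    using fP fS by (intro sum.neutral ballI) (simp add: T_def cross_facts n_def)
  also have "(\<Sum>p\<in>P. \<Sum>q\<in>P. T p q) = Top a n i j" by (simp add: Top_def T_def P_def)
  also have "(\<Sum>p\<in>S. \<Sum>q\<in>S. T p q) = (\<Sum>p\<in>S. \<Sum>q\<in>S. 4 * complex_of_real pi ^ 2 / of_nat (a n) *
        (chG a m p i * ee (1/2 * Qt a m p) * eta a m p q * chG a m q j))"
  proof (intro sum.cong refl)
    fix p q assume p: "p \<in> S" and q: "q \<in> S"
    have "fst p \<le> m" "fst q \<le> m" using fS p q by auto
    then show "T p q = 4 * complex_of_real pi ^ 2 / of_nat (a n) *
        (chG a m p i * ee (1/2 * Qt a m p) * eta a m p q * chG a m q j)"
      unfolding T_def n_def low_facts[OF \<open>fst p \<le> m\<close> \<open>fst q \<le> m\<close>] low_facts[OF \<open>fst q \<le> m\<close> \<open>fst p \<le> m\<close>]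
      by (simp add: power2_eq_square field_simps)
  qed
  also have "\<dots> = 4 * complex_of_real pi ^ 2 / of_nat (a n) * Bs a m i j"
    by (simp add: Bs_def S_def sum_distrib_left)
  finally show ?thesis by (simp add: n_def)
qed

lemma Bs_formula:
  assumes A: "\<And>i. i \<ge> 1 \<Longrightarrow> a i \<ge> 2"
  shows "Bs a n i j = (2 * complex_of_real pi) ^ n * Fper (Fp a n) (dd a n) (j - i)"
proof (induction n rule: induct2)
  case 1 then show ?case by (simp add: Bs_0 Fper_1)
next
  case 2
  have "Bs a 1 i j = Top a 1 i j" by (simp add: Bs_def Top_def)
  also have "\<dots> = (2 * complex_of_real pi) ^ 1 * Fper (Fp a 1) (dd a 1) (j - i)"
    using Top_eval[where a=a and n=1 and i=i and j=j, OF A order.refl] excl_1[where a=a and i=i and j=j, OF A]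
      dd_pos[where a=a and i=1, OF A] by simp
  finally show ?case by simp
next
  case (3 m)
  define c where "c = 2 * complex_of_real pi"
  have n1: "(1::nat) \<le> Suc (Suc m)" by simp
  have A2p: "a (Suc (Suc m)) > 0" using A[of "Suc (Suc m)"] by simp
  have D1p: "dd a (Suc m) > 0" using dd_pos[OF A] by simp
  have dd2: "dd a (Suc (Suc m)) = dd a (Suc m) * a (Suc (Suc m))" by (simp add: dd_Suc)
  have c2: "4 * complex_of_real pi ^ 2 = c ^ 2" by (simp add: c_def power2_eq_square)
  have t: "Top a (Suc (Suc m)) i j = c ^ Suc (Suc m) / of_nat (dd a (Suc (Suc m))) *
     (of_nat (dd a (Suc (Suc m))) * Fper (Fp a (Suc (Suc m))) (dd a (Suc (Suc m))) (j - i)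
      - of_nat (dd a (Suc m)) * Fper (Fp a m) (dd a m) (j - i))"
  proof -
    have t0: "Top a (Suc (Suc m)) i j = (2 * complex_of_real pi) ^ Suc (Suc m) / of_nat (dd a (Suc (Suc m))) *
     (of_nat (dd a (Suc (Suc m))) * Fper (Fp a (Suc (Suc m))) (dd a (Suc (Suc m))) (j - i)
       - (\<Sum>k'\<in>{1..dd a (Suc (Suc m) - 1)}. gk a (Suc (Suc m)) i j (a (Suc (Suc m)) * k')))"
      by (rule Top_eval) (simp_all add: A)
    have t1: "(\<Sum>k'\<in>{1..dd a (Suc (Suc m) - 1)}. gk a (Suc (Suc m)) i j (a (Suc (Suc m)) * k'))
       = of_nat (dd a (Suc m)) * Fper (Fp a m) (dd a m) (j - i)"
      by (rule excl_SS) (simp_all add: A)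
    show ?thesis unfolding t0 t1 c_def ..
  qed
  have "Bs a (Suc (Suc m)) i j = c ^ Suc (Suc m) / of_nat (dd a (Suc (Suc m))) *
     (of_nat (dd a (Suc (Suc m))) * Fper (Fp a (Suc (Suc m))) (dd a (Suc (Suc m))) (j - i)
      - of_nat (dd a (Suc m)) * Fper (Fp a m) (dd a m) (j - i))
     + c ^ 2 / of_nat (a (Suc (Suc m))) * (c ^ m * Fper (Fp a m) (dd a m) (j - i))"
    unfolding Bs_SS t 3 c2 by (simp add: c_def)
  also have "\<dots> = c ^ Suc (Suc m) * Fper (Fp a (Suc (Suc m))) (dd a (Suc (Suc m))) (j - i)"
    using A2p D1p unfolding dd2 by (simp add: field_simps power2_eq_square)
  finally show ?case by (simp add: c_def)
qed

lemma sum_nth_distinct: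
  assumes "distinct xs"
  shows "(\<Sum>u<length xs. f (xs ! u)) = (\<Sum>p\<in>set xs. f p)"
proof -
  have s: "set xs = (\<lambda>u. xs ! u) ` {..<length xs}" by (auto simp: in_set_conv_nth)
  have i: "inj_on (\<lambda>u. xs ! u) {..<length xs}" using assms by (auto intro!: inj_on_nth)
  show ?thesis unfolding s by (subst sum.reindex[OF i]) simp
qed

lemma Fper_eval:
  assumes deg: "int (degree p) + int L \<le> int N" and k: "\<bar>k\<bar> < int L"
  shows "Fper p N k = (if k \<ge> 0 then coeff p (nat k) else 0)"
proof -
  have eq: "(int N dvd int m - k) \<longleftrightarrow> (k \<ge> 0 \<and> m = nat k)" if m: "m \<le> degree p" for m
  proof
    assume "int N dvd int m - k"
    moreover have "int m - k < int N" "- int N < int m - k" using deg k m by auto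
    ultimately have "int m - k = 0"
    proof (cases "int m - k = 0")
      case False
      assume d: "int N dvd int m - k" and b: "int m - k < int N" "- int N < int m - k"
      from dvd_imp_le_int[OF False d] b show ?thesis by linarith
    qed
    then show "k \<ge> 0 \<and> m = nat k" by auto
  qed auto
  have "Fper p N k = (\<Sum>m\<le>degree p. if k \<ge> 0 \<and> m = nat k then coeff p m else 0)"
    unfolding Fper_def by (intro sum.cong refl) (simp add: eq)
  also have "\<dots> = (if k \<ge> 0 then coeff p (nat k) else 0)"
    by (cases "k \<ge> 0") (auto simp: coeff_eq_0)
  finally show ?thesis .
qed

lemma scale_sq:
  "(complex_of_real (1 / (2 * pi) powr (real n / 2))) ^ 2 * (2 * complex_of_real pi) ^ n = 1"
proof -
  have "((2 * pi) powr (real n / 2)) ^ 2 = (2 * pi) powr (real n / 2) * (2 * pi) powr (real n / 2)"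
    by (simp add: power2_eq_square)
  also have "\<dots> = (2 * pi) powr (real n / 2 + real n / 2)" by (simp only: powr_add)
  also have "\<dots> = (2 * pi) powr (real n)" by simp
  also have "\<dots> = (2 * pi) ^ n" by (simp add: powr_realpow)
  finally have "((2 * pi) powr (real n / 2)) ^ 2 = (2 * pi) ^ n" .
  then have "(1 / (2 * pi) powr (real n / 2)) ^ 2 * (2 * pi) ^ n = 1"
    by (simp add: power_divide)
  then have "complex_of_real ((1 / (2 * pi) powr (real n / 2)) ^ 2 * (2 * pi) ^ n) = 1" by simp
  then show ?thesis by simp
qed

lemma entry4:
  fixes C D E :: "complex mat"
  assumes C: "C \<in> carrier_mat L L" and D: "D \<in> carrier_mat L L" and E: "E \<in> carrier_mat L L"
    and r: "r < L" and c: "c < L"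
    and Dd: "\<And>u w. u < L \<Longrightarrow> w < L \<Longrightarrow> u \<noteq> w \<Longrightarrow> D $$ (u, w) = 0"
  shows "(transpose_mat C * D * E * C) $$ (r, c) = (\<Sum>u<L. \<Sum>v<L. C $$ (u, r) * D $$ (u, u) * E $$ (u, v) * C $$ (v, c))"
proof -
  have 1: "(transpose_mat C * D) $$ (r, u) = C $$ (u, r) * D $$ (u, u)" if u: "u < L" for u
  proof -
    have "(transpose_mat C * D) $$ (r, u) = (\<Sum>w\<in>{0..<L}. C $$ (w, r) * D $$ (w, u))"
      using C D r u by (simp add: scalar_prod_def)
    also have "\<dots> = (\<Sum>w\<in>{0..<L}. if w = u then C $$ (u, r) * D $$ (u, u) else 0)"
      using Dd u by (intro sum.cong refl) auto
    also have "\<dots> = C $$ (u, r) * D $$ (u, u)" using u by simp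
    finally show ?thesis .
  qed
  have 2: "(transpose_mat C * D * E) $$ (r, v) = (\<Sum>u<L. C $$ (u, r) * D $$ (u, u) * E $$ (u, v))" if v: "v < L" for v
  proof -
    have "(transpose_mat C * D * E) $$ (r, v) = (\<Sum>u\<in>{0..<L}. (transpose_mat C * D) $$ (r, u) * E $$ (u, v))"
      using C D E r v by (simp add: scalar_prod_def del: assoc_mult_mat)
    also have "\<dots> = (\<Sum>u<L. C $$ (u, r) * D $$ (u, u) * E $$ (u, v))"
      using 1 by (simp add: lessThan_atLeast0)
    finally show ?thesis .
  qed
  have "(transpose_mat C * D * E * C) $$ (r, c) = (\<Sum>v\<in>{0..<L}. (transpose_mat C * D * E) $$ (r, v) * C $$ (v, c))"
    using C D E r c by (simp add: scalar_prod_def del: assoc_mult_mat)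
  also have "\<dots> = (\<Sum>v<L. \<Sum>u<L. C $$ (u, r) * D $$ (u, u) * E $$ (u, v) * C $$ (v, c))"
    using 2 by (simp add: lessThan_atLeast0 sum_distrib_right)
  also have "\<dots> = (\<Sum>u<L. \<Sum>v<L. C $$ (u, r) * D $$ (u, u) * E $$ (u, v) * C $$ (v, c))"
    by (rule sum.swap)
  finally show ?thesis .
qed

lemma carriers:
  fixes a :: "nat \<Rightarrow> nat" and n :: nat and s :: real
  assumes A: "\<And>i. i \<ge> 1 \<Longrightarrow> a i \<ge> 2"
  defines "L \<equiv> length (Iset a n)"
  shows "chMat a n \<in> carrier_mat L L" "QtMat a n s \<in> carrier_mat L L" "etaMat a n \<in> carrier_mat L L"
    "chiMat a n \<in> carrier_mat L L" "nat (mutilde a n) = L"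
proof -
  have m: "nat (mutilde a n) = L" using length_Iset[where a=a and n=n, OF A] by (simp add: L_def)
  show "chMat a n \<in> carrier_mat L L" "QtMat a n s \<in> carrier_mat L L" "etaMat a n \<in> carrier_mat L L"
    "chiMat a n \<in> carrier_mat L L" "nat (mutilde a n) = L"
    by (simp_all add: chMat_def QtMat_def etaMat_def chiMat_def m L_def)
qed

lemma chi_eq:
  fixes a :: "nat \<Rightarrow> nat" and n :: nat
  assumes A: "\<And>i. i \<ge> 1 \<Longrightarrow> a i \<ge> 2"
  defines "C \<equiv> (complex_of_real (1 / (2 * pi) powr (real n / 2))) \<cdot>\<^sub>m chMat a n"
  shows "transpose_mat C * QtMat a n (1/2) * etaMat a n * C = chiMat a n"
proof -
  define L where "L = length (Iset a n)"
  define I where "I = Iset a n"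
  define s where "s = complex_of_real (1 / (2 * pi) powr (real n / 2))"
  note cr = carriers[where a=a and n=n, OF A, folded L_def]
  have Cc: "C \<in> carrier_mat L L" using cr by (simp add: C_def)
  have Cent: "C $$ (u, r) = s * chG a n (I ! u) (int r + 1)" if "u < L" "r < L" for u r
    using that cr by (simp add: C_def s_def chMat_def I_def L_def)
  have Dent: "QtMat a n (1/2) $$ (u, w) = (if u = w then ee (1/2 * Qt a n (I ! u)) else 0)" if "u < L" "w < L" for u w
    using that by (simp add: QtMat_def I_def L_def)
  have Eent: "etaMat a n $$ (u, w) = eta a n (I ! u) (I ! w)" if "u < L" "w < L" for u w
    using that by (simp add: etaMat_def I_def L_def)
  have dist: "distinct I" by (simp add: I_def distinct_Iset)
  have LI: "L = length I" by (simp add: L_def I_def)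
  have deg: "int (degree (Fp a n)) + int L \<le> int (dd a n)"
    using degree_Fp[where a=a and n=n, OF A] length_Iset[where a=a and n=n, OF A] by (simp add: L_def)
  show ?thesis
  proof (rule eq_matI)
    fix r c assume r: "r < dim_row (chiMat a n)" and c: "c < dim_col (chiMat a n)"
    then have r: "r < L" and c: "c < L" using cr by auto
    have "(transpose_mat C * QtMat a n (1/2) * etaMat a n * C) $$ (r, c)
       = (\<Sum>u<L. \<Sum>v<L. C $$ (u, r) * QtMat a n (1/2) $$ (u, u) * etaMat a n $$ (u, v) * C $$ (v, c))"
      by (rule entry4[OF Cc cr(2) cr(3) r c]) (use Dent in auto)
    also have "\<dots> = (\<Sum>u<L. \<Sum>v<L. s^2 * (chG a n (I ! u) (int r + 1) * ee (1/2 * Qt a n (I ! u))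
          * eta a n (I ! u) (I ! v) * chG a n (I ! v) (int c + 1)))"
      using r c by (intro sum.cong refl) (simp add: Cent Dent Eent power2_eq_square mult_ac)
    also have "\<dots> = s^2 * Bs a n (int r + 1) (int c + 1)"
    proof -
      define T where "T p q = chG a n p (int r + 1) * ee (1/2 * Qt a n p) * eta a n p q * chG a n q (int c + 1)" for p q
      have "(\<Sum>u<L. \<Sum>v<L. s^2 * (chG a n (I ! u) (int r + 1) * ee (1/2 * Qt a n (I ! u))
          * eta a n (I ! u) (I ! v) * chG a n (I ! v) (int c + 1))) = s^2 * (\<Sum>u<L. \<Sum>v<L. T (I ! u) (I ! v))"
        by (simp add: T_def sum_distrib_left)
      also have "(\<Sum>u<L. \<Sum>v<L. T (I ! u) (I ! v)) = (\<Sum>u<L. \<Sum>q\<in>set I. T (I ! u) q)"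
        unfolding LI by (intro sum.cong refl) (rule sum_nth_distinct[OF dist])
      also have "\<dots> = (\<Sum>p\<in>set I. \<Sum>q\<in>set I. T p q)"
        unfolding LI by (rule sum_nth_distinct[OF dist])
      finally show ?thesis by (simp add: Bs_def T_def I_def)
    qed
    also have "\<dots> = Fper (Fp a n) (dd a n) (int c - int r)"
      using scale_sq[of n] by (simp add: Bs_formula[OF A] s_def mult.assoc[symmetric])
    also have "\<dots> = (if int c - int r \<ge> 0 then coeff (Fp a n) (nat (int c - int r)) else 0)"
      by (rule Fper_eval[OF deg]) (use r c in auto)
    also have "\<dots> = chiMat a n $$ (r, c)"
    proof (cases "r \<le> c")
      case True
      have "c - r < dd a n" using deg c by linarith
      then show ?thesis using True r c cr by (simp add: chiMat_def inverse_phi_nth[OF A] nat_diff_distrib)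
    next
      case False then show ?thesis using r c cr by (simp add: chiMat_def)
    qed
    finally show "(transpose_mat C * QtMat a n (1/2) * etaMat a n * C) $$ (r, c) = chiMat a n $$ (r, c)" .
  next
    show "dim_row (transpose_mat C * QtMat a n (1/2) * etaMat a n * C) = dim_row (chiMat a n)"
      using cr Cc by simp
    show "dim_col (transpose_mat C * QtMat a n (1/2) * etaMat a n * C) = dim_col (chiMat a n)"
      using cr Cc by simp
  qed
qed

lemma eta_sym_aux: "\<forall>p q. eta a n p q = eta a n q p"
proof (induction n rule: induct2)
  case 1 then show ?case by simp
next
  case 2 then show ?case by (auto simp: add.commute)
next
  case (3 m) then show ?case by (auto simp: add.commute)
qed

lemma eta_sym: "eta a n p q = eta a n q p"
  using eta_sym_aux by blast

lemma eta_Qt_aux: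
  assumes A: "\<And>i. i \<ge> 1 \<Longrightarrow> a i \<ge> 2"
  shows "\<forall>p q. p \<in> set (Iset a n) \<longrightarrow> q \<in> set (Iset a n) \<longrightarrow> eta a n p q \<noteq> 0 \<longrightarrow> Qt a n p + Qt a n q = 0"
proof (induction n rule: induct2)
  case 1 then show ?case by simp
next
  case 2
  show ?case
  proof (intro allI impI)
    fix p q assume p: "p \<in> set (Iset a (Suc 0))" and q: "q \<in> set (Iset a (Suc 0))" and e: "eta a (Suc 0) p q \<noteq> 0"
    obtain k where pk: "p = (1, k)" "1 \<le> k" "k \<le> dd a 1" "\<not> a 1 dvd k" using p by (auto simp: Iprime_def dd_def)
    obtain l where ql: "q = (1, l)" using q by (auto simp: Iprime_def)
    have "k + l = dd a 1" using e pk ql by (auto simp: dd_def split: if_splits)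
    then have l: "l = dd a 1 - k" by simp
    have "omega a 1 l 1 = 1 - omega a 1 k 1"
      unfolding l by (rule omega_props(3)[OF A _ _ pk(4) pk(3)]) auto
    then show "Qt a (Suc 0) p + Qt a (Suc 0) q = 0" using pk ql by simp
  qed
next
  case (3 m)
  show ?case
  proof (intro allI impI)
    fix p q assume p: "p \<in> set (Iset a (Suc (Suc m)))" and q: "q \<in> set (Iset a (Suc (Suc m)))"
      and e: "eta a (Suc (Suc m)) p q \<noteq> 0"
    define n where "n = Suc (Suc m)"
    show "Qt a (Suc (Suc m)) p + Qt a (Suc (Suc m)) q = 0"
    proof (cases "fst p = n")
      case True
      obtain k where pk: "p = (n, k)" "1 \<le> k" "k \<le> dd a n" "\<not> a n dvd k"
        using p True Iset_fst[of p a m] by (auto simp: Iprime_def n_def)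
      have qn: "fst q = n"
      proof (rule ccontr)
        assume "fst q \<noteq> n"
        then show False using e pk by (cases q) (auto simp: n_def)
      qed
      obtain l where ql: "q = (n, l)" using qn by (cases q) auto
      have "k + l = dd a n" using e pk ql by (auto simp: n_def split: if_splits)
      then have l: "l = dd a n - k" by simp
      have "Qt a n q = (\<Sum>i\<in>{1..n}. omega a n l i - 1/2)" using ql Qt_top[of n a l] by (simp add: n_def)
      also have "\<dots> = (\<Sum>i\<in>{1..n}. - (omega a n k i - 1/2))"
        unfolding l by (intro sum.cong refl) (simp add: omega_props(3)[OF A _ _ pk(4) pk(3)])
      also have "\<dots> = - (\<Sum>i\<in>{1..n}. omega a n k i - 1/2)" by (rule sum_negf)
      also have "\<dots> = - Qt a n p" using pk Qt_top[of n a k] by (simp add: n_def)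
      finally show ?thesis by (simp add: n_def)
    next
      case False
      then have pl: "p \<in> set (Iset a m)" using p by (auto simp: Iprime_def n_def)
      have ql: "q \<in> set (Iset a m)"
      proof (rule ccontr)
        assume "q \<notin> set (Iset a m)"
        then have "fst q = n" using q by (auto simp: Iprime_def n_def)
        then show False using e False by (cases p; cases q) (auto simp: n_def)
      qed
      have fp: "fst p \<le> m" "fst q \<le> m" using pl ql Iset_fst by auto
      have "eta a m p q \<noteq> 0" using e low_facts(3)[OF fp] by auto
      then have "Qt a m p + Qt a m q = 0" using "3"[rule_format, OF pl ql] by blast
      then show ?thesis using low_facts(2)[OF fp] low_facts(2)[OF fp(2) fp(1)] by simp
    qed
  qed
qed

lemma eta_Qt:
  assumes A: "\<And>i. i \<ge> 1 \<Longrightarrow> a i \<ge> 2"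
    and "p \<in> set (Iset a n)" "q \<in> set (Iset a n)" "eta a n p q \<noteq> 0"
  shows "Qt a n p + Qt a n q = 0"
  using eta_Qt_aux[where a=a and n=n, OF A] assms(2-) by blast

lemma diag_right:
  fixes X Dg :: "complex mat"
  assumes "X \<in> carrier_mat L L" "Dg \<in> carrier_mat L L" "r < L" "c < L"
    and "\<And>u w. u < L \<Longrightarrow> w < L \<Longrightarrow> u \<noteq> w \<Longrightarrow> Dg $$ (u, w) = 0"
  shows "(X * Dg) $$ (r, c) = X $$ (r, c) * Dg $$ (c, c)"
proof -
  have "(X * Dg) $$ (r, c) = (\<Sum>w\<in>{0..<L}. X $$ (r, w) * Dg $$ (w, c))"
    using assms by (simp add: scalar_prod_def)
  also have "\<dots> = (\<Sum>w\<in>{0..<L}. if w = c then X $$ (r, c) * Dg $$ (c, c) else 0)"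
    using assms by (intro sum.cong refl) auto
  also have "\<dots> = X $$ (r, c) * Dg $$ (c, c)" using assms by simp
  finally show ?thesis .
qed

lemma diag_left:
  fixes X Dg :: "complex mat"
  assumes "X \<in> carrier_mat L L" "Dg \<in> carrier_mat L L" "r < L" "c < L"
    and "\<And>u w. u < L \<Longrightarrow> w < L \<Longrightarrow> u \<noteq> w \<Longrightarrow> Dg $$ (u, w) = 0"
  shows "(Dg * X) $$ (r, c) = Dg $$ (r, r) * X $$ (r, c)"
proof -
  have "(Dg * X) $$ (r, c) = (\<Sum>w\<in>{0..<L}. Dg $$ (r, w) * X $$ (w, c))"
    using assms by (simp add: scalar_prod_def)
  also have "\<dots> = (\<Sum>w\<in>{0..<L}. if w = r then Dg $$ (r, r) * X $$ (r, c) else 0)"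
    using assms by (intro sum.cong refl) auto
  also have "\<dots> = Dg $$ (r, r) * X $$ (r, c)" using assms by simp
  finally show ?thesis .
qed

lemma unit_inv:
  fixes A :: "complex mat"
  assumes "A \<in> carrier_mat L L" "det A \<noteq> 0"
  shows "\<exists>B. B \<in> carrier_mat L L \<and> B * A = 1\<^sub>m L \<and> A * B = 1\<^sub>m L"
  using det_non_zero_imp_unit[OF assms, of undefined] by (auto simp: Units_def ring_mat_def)

lemma mat_inv_eq:
  fixes A B :: "complex mat"
  assumes A: "A \<in> carrier_mat L L" and B: "B \<in> carrier_mat L L" and BA: "B * A = 1\<^sub>m L" and AB: "A * B = 1\<^sub>m L"
  shows "mat_inv A = B"
  unfolding mat_inv_def
proof (rule the_equality)
  show "B \<in> carrier_mat (dim_row A) (dim_row A) \<and> B * A = 1\<^sub>m (dim_row A) \<and> A * B = 1\<^sub>m (dim_row A)"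
    using A B BA AB by simp
next
  fix B' assume "B' \<in> carrier_mat (dim_row A) (dim_row A) \<and> B' * A = 1\<^sub>m (dim_row A) \<and> A * B' = 1\<^sub>m (dim_row A)"
  then have B': "B' \<in> carrier_mat L L" "B' * A = 1\<^sub>m L" using A by auto
  have "B' = B' * (A * B)" using B' AB by simp
  also have "\<dots> = (B' * A) * B" by (rule assoc_mult_mat[symmetric, OF B'(1) A B])
  also have "\<dots> = B" using B' B by simp
  finally show "B' = B" .
qed

theorem theorem3p4:
  fixes a :: "nat \<Rightarrow> nat" and n :: nat
  assumes "\<And>i. i \<ge> 1 \<Longrightarrow> a i \<ge> 2"
  defines "C \<equiv> (complex_of_real (1 / (2 * pi) powr (real n / 2))) \<cdot>\<^sub>m chMat a n"
  shows "invertible_mat C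
    \<and> mat_inv C * QtMat a n 1 * C = SerreMat a n
    \<and> transpose_mat C * QtMat a n (1/2) * etaMat a n * C = chiMat a n"
proof -
  have A: "\<And>i. i \<ge> 1 \<Longrightarrow> a i \<ge> 2" by (fact assms)
  define L where "L = length (Iset a n)"
  define I where "I = Iset a n"
  define T where "T = transpose_mat C"
  define D where "D = QtMat a n (1/2)"
  define D1 where "D1 = QtMat a n 1"
  define E where "E = etaMat a n"
  define X where "X = chiMat a n"
  note cr = carriers[where a=a and n=n, OF A, folded L_def]
  have Cc: "C \<in> carrier_mat L L" using cr by (simp add: C_def)
  have Tc: "T \<in> carrier_mat L L" using Cc by (simp add: T_def)
  have Dc: "D \<in> carrier_mat L L" using cr by (simp add: D_def)
  have D1c: "D1 \<in> carrier_mat L L" using cr by (simp add: D1_def)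
  have Ec: "E \<in> carrier_mat L L" using cr by (simp add: E_def)
  have Xc: "X \<in> carrier_mat L L" using cr by (simp add: X_def)
  have chi: "T * D * E * C = X"
    unfolding T_def D_def E_def X_def C_def by (rule chi_eq[OF A])
  have phi0: "fps_nth (phi a n) 0 \<noteq> 0"
  proof -
    have "fps_nth (fps_of_poly (Fp a n) * phi a n) 0 = 1"
      using dd_pos[where a=a and i=n, OF A] by (simp add: Fp_phi[OF A])
    then show ?thesis by auto
  qed
  have ut: "upper_triangular X"
    unfolding upper_triangular_def X_def chiMat_def by simp
  have "det X = (\<Prod>i = 0..<L. X $$ (i, i))"
    using det_upper_triangular[OF ut Xc] Xc by (simp add: prod_list_diag_prod)
  also have "\<dots> = (\<Prod>i = 0..<L. inverse (fps_nth (phi a n) 0))"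
    using cr by (intro prod.cong refl) (simp add: X_def chiMat_def)
  finally have detX: "det X \<noteq> 0" using phi0 by simp
  have "det X = det (T * D * E) * det C"
    unfolding chi[symmetric] by (rule det_mult[OF _ Cc]) (use Tc Dc Ec in simp)
  then have detC: "det C \<noteq> 0" using detX by auto
  obtain B where Bc: "B \<in> carrier_mat L L" and BC: "B * C = 1\<^sub>m L" and CB: "C * B = 1\<^sub>m L"
    using unit_inv[OF Cc detC] by blast
  obtain Y where Yc: "Y \<in> carrier_mat L L" and YX: "Y * X = 1\<^sub>m L" and XY: "X * Y = 1\<^sub>m L"
    using unit_inv[OF Xc detX] by blast
  have inv: "invertible_mat C"
    unfolding invertible_mat_def inverts_mat_def using Cc Bc BC CB by (auto intro!: exI[of _ B])
  have mC: "mat_inv C = B" by (rule mat_inv_eq[OF Cc Bc BC CB])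
  have mX: "mat_inv X = Y" by (rule mat_inv_eq[OF Xc Yc YX XY])
  have Dd: "\<And>u w. u < L \<Longrightarrow> w < L \<Longrightarrow> u \<noteq> w \<Longrightarrow> D $$ (u, w) = 0"
    by (simp add: D_def QtMat_def L_def)
  have D1d: "\<And>u w. u < L \<Longrightarrow> w < L \<Longrightarrow> u \<noteq> w \<Longrightarrow> D1 $$ (u, w) = 0"
    by (simp add: D1_def QtMat_def L_def)
  have key: "D * E * D1 = E * D"
  proof (rule eq_matI)
    fix r c assume "r < dim_row (E * D)" "c < dim_col (E * D)"
    then have r: "r < L" and c: "c < L" using Ec Dc by auto
    have "(D * E * D1) $$ (r, c) = D $$ (r, r) * E $$ (r, c) * D1 $$ (c, c)"
      using diag_right[OF _ D1c r c D1d] diag_left[OF Ec Dc r c Dd] Dc Ec by simp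
    also have "\<dots> = E $$ (r, c) * D $$ (c, c)"
    proof (cases "E $$ (r, c) = 0")
      case True then show ?thesis by simp
    next
      case False
      then have "eta a n (I ! r) (I ! c) \<noteq> 0" using r c by (simp add: E_def etaMat_def I_def L_def)
      moreover have "I ! r \<in> set (Iset a n)" "I ! c \<in> set (Iset a n)" using r c by (simp_all add: I_def L_def)
      ultimately have q: "Qt a n (I ! r) = - Qt a n (I ! c)" using eta_Qt[OF A] by fastforce
      have "D $$ (r, r) * D1 $$ (c, c) = ee (1/2 * Qt a n (I ! r)) * ee (1 * Qt a n (I ! c))"
        using r c by (simp add: D_def D1_def QtMat_def I_def L_def)
      also have "\<dots> = ee (1/2 * Qt a n (I ! r) + 1 * Qt a n (I ! c))" by (simp add: ee_add)
      also have "1/2 * Qt a n (I ! r) + 1 * Qt a n (I ! c) = 1/2 * Qt a n (I ! c)" using q by simp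
      also have "ee (1/2 * Qt a n (I ! c)) = D $$ (c, c)"
        using c by (simp add: D_def QtMat_def I_def L_def)
      finally show ?thesis by (simp add: mult_ac)
    qed
    also have "\<dots> = (E * D) $$ (r, c)" using diag_right[OF Ec Dc r c Dd] by simp
    finally show "(D * E * D1) $$ (r, c) = (E * D) $$ (r, c)" .
  qed (use Dc Ec D1c in auto)
  have ET: "transpose_mat E = E"
    by (rule eq_matI) (use Ec in \<open>auto simp: E_def etaMat_def eta_sym\<close>)
  have DT: "transpose_mat D = D"
    by (rule eq_matI) (use Dc in \<open>auto simp: D_def QtMat_def\<close>)
  have TT: "transpose_mat T = C" by (simp add: T_def)
  have XT: "transpose_mat X = T * ((E * D) * C)"
  proof -
    have "transpose_mat X = transpose_mat (T * D * E * C)" using chi by simp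
    also have "\<dots> = transpose_mat C * transpose_mat (T * D * E)"
      by (rule transpose_mult[of _ L L]) (use Tc Dc Ec Cc in auto)
    also have "transpose_mat (T * D * E) = transpose_mat E * transpose_mat (T * D)"
      by (rule transpose_mult[of _ L L]) (use Tc Dc Ec in auto)
    also have "transpose_mat (T * D) = transpose_mat D * transpose_mat T"
      by (rule transpose_mult[of _ L L]) (use Tc Dc in auto)
    finally have "transpose_mat X = T * (E * (D * C))" unfolding ET DT T_def by simp
    also have "E * (D * C) = (E * D) * C" using Ec Dc Cc by simp
    finally show ?thesis .
  qed
  have as: "\<And>P Q R. P \<in> carrier_mat L L \<Longrightarrow> Q \<in> carrier_mat L L \<Longrightarrow> R \<in> carrier_mat L L \<Longrightarrow> P * Q * R = P * (Q * R)"
    using assoc_mult_mat by blast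
  have mc: "\<And>P Q. P \<in> carrier_mat L L \<Longrightarrow> Q \<in> carrier_mat L L \<Longrightarrow> P * Q \<in> carrier_mat L L"
    by simp
  have XBDC: "X * (B * D1 * C) = T * ((E * D) * C)"
  proof -
    have Mc: "T * D * E \<in> carrier_mat L L" using Tc Dc Ec by simp
    have BDc: "B * D1 \<in> carrier_mat L L" using Bc D1c by simp
    have Zc: "B * D1 * C \<in> carrier_mat L L" using Bc D1c Cc by simp
    have "X * (B * D1 * C) = (T * D * E) * (C * (B * D1 * C))"
      unfolding chi[symmetric] by (rule as[OF Mc Cc Zc])
    also have "C * (B * D1 * C) = (C * (B * D1)) * C" by (rule as[OF Cc BDc Cc, symmetric])
    also have "C * (B * D1) = (C * B) * D1" by (rule as[OF Cc Bc D1c, symmetric])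
    also have "(C * B) * D1 = D1" using CB D1c by simp
    also have "(T * D * E) * (D1 * C) = ((T * D * E) * D1) * C" by (rule as[OF Mc D1c Cc, symmetric])
    also have "(T * D * E) * D1 = (T * D) * (E * D1)" by (rule as[OF mc[OF Tc Dc] Ec D1c])
    also have "\<dots> = T * (D * (E * D1))" by (rule as[OF Tc Dc mc[OF Ec D1c]])
    also have "D * (E * D1) = D * E * D1" by (rule as[OF Dc Ec D1c, symmetric])
    also have "(T * (D * E * D1)) * C = T * ((D * E * D1) * C)" by (rule as[OF Tc mc[OF mc[OF Dc Ec] D1c] Cc])
    finally show ?thesis unfolding key .
  qed
  have serre: "mat_inv C * QtMat a n 1 * C = SerreMat a n"
  proof -
    have "SerreMat a n = Y * transpose_mat X" unfolding SerreMat_def X_def[symmetric] mX ..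
    also have "\<dots> = Y * (X * (B * D1 * C))" unfolding XT XBDC ..
    also have "\<dots> = (Y * X) * (B * D1 * C)" by (rule as[OF Yc Xc mc[OF mc[OF Bc D1c] Cc], symmetric])
    also have "\<dots> = B * D1 * C" using YX Bc D1c Cc by simp
    finally show ?thesis by (simp add: mC D1_def)
  qed
  show ?thesis using inv serre chi by (simp add: T_def D_def E_def X_def)
qed

end
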